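(* Let $Q$ be a quantum circuit acting on $w$ qubits and let $N$ be a positive integer that is a power of two; set $l=\log_2 N+1$. Let $R_1^{(N)}$ be the circuit with registers: an $l$-qubit counter register $\mathsf{C}$ whose first qubit $\mathsf{C}^{(1)}$ is the first qubit of the whole circuit and holds the most significant bit, a single-qubit register $\mathsf{Q}$, and for each $j\in\{1,\dots,2N\}$ a $(w-1)$-qubit register $\mathsf{R}_j$ and a single-qubit register $\mathsf{X}_j$; it performs, for $j=1,\dots,2N$ in turn: apply $Q$ to $(\mathsf{Q},\mathsf{R}_j)$ (with $\mathsf{Q}$ as $Q$'s first qubit), apply CNOT with control $\mathsf{Q}$ and target $\mathsf{X}_j$, and apply the controlled-$U_{+1}^{(2N)}$ with control $\mathsf{Q}$ and target $\mathsf{C}$, where $U^{(2N)}_{+1}|j\rangle=|(j+1)\bmod 2N\rangle$; its output qubit is $\mathsf{C}^{(1)}$. Then \[p_{\mathrm{acc}}(R_1^{(N)},1)\ge \bigl(p_{\mathrm{acc}}(Q,1)\bigr)^{2N-1}.\]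
   Context: For a circuit $Q$ on $w$ qubits and $1\le k\le w$, $p_{\mathrm{acc}}(Q,k)=\mathrm{tr}\,\Pi_{\mathrm{acc}}Q\rho^{(w,k)}_{\mathrm{init}}Q^\dagger$, where $\rho^{(w,k)}_{\mathrm{init}}=(|0\rangle\langle0|)^{\otimes k}\otimes(I/2)^{\otimes(w-k)}$ and $\Pi_{\mathrm{acc}}=|0\rangle\langle0|\otimes I^{\otimes(w-1)}$; i.e., the first $k$ qubits start in $|0\rangle$, the remaining qubits are maximally mixed, and acceptance means the first qubit is measured as $0$ in the computational basis. For $R_1^{(N)}$, only $\mathsf{C}^{(1)}$ is clean; all other qubits (the rest of $\mathsf{C}$, $\mathsf{Q}$, $\mathsf{R}_j$, $\mathsf{X}_j$) start maximally mixed. The counter register $\mathsf{C}$ encodes an integer in $\{0,\dots,2N-1\}$ in binary. *)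

theory Defs
  imports Complex_Main "Jordan_Normal_Form.Matrix"
begin

text \<open>A computational
basis index i < 2^n encodes the qubits in big-endian order: qubit p (0-based,
p < n) is bit (n - 1 - p) of i, so qubit 0 (the "first qubit") is the most
significant bit.\<close>

definition qbit :: "nat \<Rightarrow> nat \<Rightarrow> nat \<Rightarrow> bool" where
  "qbit n i p = odd (i div 2 ^ (n - 1 - p))"

definition cadj :: "complex mat \<Rightarrow> complex mat" where
  "cadj A = mat (dim_col A) (dim_row A) (\<lambda>(i, j). cnj (A $$ (j, i)))"

definition is_unitary :: "nat \<Rightarrow> complex mat \<Rightarrow> bool" where
  "is_unitary d U \<longleftrightarrow> U \<in> carrier_mat d d \<and> cadj U * U = 1\<^sub>m d \<and> U * cadj U = 1\<^sub>m d"

definition is_circuit :: "nat \<Rightarrow> complex mat \<Rightarrow> bool" where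
  "is_circuit w Q \<longleftrightarrow> is_unitary (2 ^ w) Q"

text \<open>Index of the k-qubit local basis state obtained by reading the qubits at the
positions ps (ps!0 being the most significant, i.e. first, qubit of the gate).\<close>
definition qread :: "nat \<Rightarrow> nat list \<Rightarrow> nat \<Rightarrow> nat" where
  "qread n ps i = (\<Sum>t<length ps. (if qbit n i (ps ! t) then 2 ^ (length ps - 1 - t) else 0))"

definition lift :: "nat \<Rightarrow> nat list \<Rightarrow> complex mat \<Rightarrow> complex mat" where
  "lift n ps U = mat (2 ^ n) (2 ^ n) (\<lambda>(i, j).
     if (\<forall>p<n. p \<notin> set ps \<longrightarrow> qbit n i p = qbit n j p)
     then U $$ (qread n ps i, qread n ps j) else 0)"

text \<open>Controlled gate: the first qubit is the control.\<close>
definition controlled :: "nat \<Rightarrow> complex mat \<Rightarrow> complex mat" where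
  "controlled k U = mat (2 ^ (k + 1)) (2 ^ (k + 1)) (\<lambda>(i, j).
     if i < 2 ^ k \<and> j < 2 ^ k then (if i = j then 1 else 0)
     else if 2 ^ k \<le> i \<and> 2 ^ k \<le> j then U $$ (i - 2 ^ k, j - 2 ^ k) else 0)"

definition pauli_X :: "complex mat" where
  "pauli_X = mat 2 2 (\<lambda>(i, j). if i \<noteq> j then 1 else 0)"

definition CNOT :: "complex mat" where
  "CNOT = controlled 1 pauli_X"

definition incr :: "nat \<Rightarrow> complex mat" where
  "incr M = mat M M (\<lambda>(i, j). if i = (j + 1) mod M then 1 else 0)"

definition rho_init :: "nat \<Rightarrow> nat \<Rightarrow> complex mat" where
  "rho_init w k = mat (2 ^ w) (2 ^ w) (\<lambda>(i, j).
     if i = j \<and> (\<forall>p<k. \<not> qbit w i p) then 1 / 2 ^ (w - k) else 0)"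

definition Pi_acc :: "nat \<Rightarrow> complex mat" where
  "Pi_acc w = mat (2 ^ w) (2 ^ w) (\<lambda>(i, j). if i = j \<and> \<not> qbit w i 0 then 1 else 0)"

definition mtrace :: "complex mat \<Rightarrow> complex" where
  "mtrace A = (\<Sum>i<dim_row A. A $$ (i, i))"

definition p_acc :: "nat \<Rightarrow> complex mat \<Rightarrow> nat \<Rightarrow> real" where
  "p_acc w Q k = Re (mtrace (Pi_acc w * Q * rho_init w k * cadj Q))"

text \<open>The circuit R_1^{(N)} with N = 2^m, l = m + 1, for Q on w qubits.
 Qubit layout (0-based): C = qubits 0..l-1 (qubit 0 = C^(1), the most significant bit
 of the counter), Q = qubit l, and for j = 0..2N-1 (i.e. j+1 in the paper's indexing)
 R_{j+1} = qubits l+1+j*w .. l+1+j*w+(w-2), X_{j+1} = qubit l+1+j*w+(w-1).\<close>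

definition R1_nqubits :: "nat \<Rightarrow> nat \<Rightarrow> nat" where
  "R1_nqubits w m = (m + 1) + 1 + 2 * 2 ^ m * w"

definition R1_step :: "nat \<Rightarrow> nat \<Rightarrow> complex mat \<Rightarrow> nat \<Rightarrow> complex mat" where
  "R1_step w m Q j =
    (let n = R1_nqubits w m; l = m + 1; q = l; base = l + 1 + j * w;
         Rj = [base ..< base + (w - 1)]; Xj = base + (w - 1)
     in lift n (q # [0..<l]) (controlled l (incr (2 * 2 ^ m)))
        * lift n [q, Xj] CNOT
        * lift n (q # Rj) Q)"

fun R1_upto :: "nat \<Rightarrow> nat \<Rightarrow> complex mat \<Rightarrow> nat \<Rightarrow> complex mat" where
  "R1_upto w m Q 0 = 1\<^sub>m (2 ^ R1_nqubits w m)"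
| "R1_upto w m Q (Suc j) = R1_step w m Q j * R1_upto w m Q j"

definition R1 :: "nat \<Rightarrow> nat \<Rightarrow> complex mat \<Rightarrow> complex mat" where
  "R1 w m Q = R1_upto w m Q (2 * 2 ^ m)"

end

theory Submission
  imports Defs
begin
lemma qbit_bit: "qbit n i p = bit i (n - 1 - p)"
  by (simp add: qbit_def bit_iff_odd)

lemma high_bit_false: "(i::nat) < 2 ^ n \<Longrightarrow> n \<le> k \<Longrightarrow> \<not> bit i k"
  by (metis bit_take_bit_iff leD take_bit_nat_eq_self_iff)

lemma idx_eq:
  assumes "(i::nat) < 2 ^ n" "j < 2 ^ n" "\<forall>p<n. qbit n i p = qbit n j p"
  shows "i = j"
proof (rule bit_eq_iff[THEN iffD2], intro allI impI)
  fix k assume "possible_bit TYPE(nat) k"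
  show "bit i k = bit j k"
  proof (cases "k < n")
    case True
    have "n - 1 - (n - 1 - k) = k" using True by simp
    then show ?thesis using assms(3)[rule_format, of "n - 1 - k"] True by (simp add: qbit_bit)
  next
    case False
    then show ?thesis using high_bit_false assms(1,2) by (meson not_le)
  qed
qed

definition setq :: "nat \<Rightarrow> nat \<Rightarrow> bool \<Rightarrow> nat \<Rightarrow> nat" where
  "setq n p v i = (if v then set_bit (n - 1 - p) i else unset_bit (n - 1 - p) i)"

lemma setq_bit: "p < n \<Longrightarrow> p' < n \<Longrightarrow> qbit n (setq n p v i) p' = (if p' = p then v else qbit n i p')"
  by (auto simp: setq_def qbit_bit bit_set_bit_iff bit_unset_bit_iff)

lemma setq_less: assumes "p < n" "i < 2 ^ n" shows "setq n p v i < 2 ^ n"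
proof -
  have hb: "bit i k \<Longrightarrow> k < n" for k using high_bit_false[OF assms(2), of k] by fastforce
  have "take_bit n (setq n p v i) = setq n p v i"
    by (rule bit_eq_iff[THEN iffD2]) (use assms hb in
        \<open>auto simp: setq_def bit_take_bit_iff bit_set_bit_iff bit_unset_bit_iff\<close>)
  then show ?thesis by (metis take_bit_nat_eq_self_iff)
qed

lemma qread_Nil[simp]: "qread n [] i = 0" by (simp add: qread_def)

lemma qread_Cons: "qread n (p # ps) i = (if qbit n i p then 2 ^ length ps else 0) + qread n ps i"
  unfolding qread_def by (simp only: length_Cons sum.lessThan_Suc_shift) (auto intro!: sum.cong)

lemma qread_less: "qread n ps i < 2 ^ length ps"
  by (induction ps) (auto simp: qread_Cons)

lemma qread_cong: "(\<forall>p\<in>set ps. qbit n i p = qbit n j p) \<Longrightarrow> qread n ps i = qread n ps j"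
  by (induction ps) (auto simp: qread_Cons)

lemma qread_inj: "qread n ps i = qread n ps j \<Longrightarrow> \<forall>p\<in>set ps. qbit n i p = qbit n j p"
proof (induction ps)
  case Nil then show ?case by simp
next
  case (Cons p ps)
  have "qread n ps i < 2 ^ length ps" "qread n ps j < 2 ^ length ps" by (rule qread_less)+
  with Cons.prems have "qbit n i p = qbit n j p" "qread n ps i = qread n ps j"
    by (auto simp: qread_Cons split: if_splits)
  with Cons.IH show ?case by simp
qed

fun qwrite :: "nat \<Rightarrow> nat list \<Rightarrow> nat \<Rightarrow> nat \<Rightarrow> nat" where
  "qwrite n [] j a = j"
| "qwrite n (p # ps) j a = setq n p (a div 2 ^ length ps = 1) (qwrite n ps j (a mod 2 ^ length ps))"

lemma qwrite_less: "set ps \<subseteq> {..<n} \<Longrightarrow> j < 2 ^ n \<Longrightarrow> qwrite n ps j a < 2 ^ n"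
  by (induction ps arbitrary: a) (auto simp: setq_less)

lemma qwrite_out: "set ps \<subseteq> {..<n} \<Longrightarrow> p \<notin> set ps \<Longrightarrow> p < n \<Longrightarrow> qbit n (qwrite n ps j a) p = qbit n j p"
  by (induction ps arbitrary: a) (auto simp: setq_bit)

lemma qwrite_read: "set ps \<subseteq> {..<n} \<Longrightarrow> distinct ps \<Longrightarrow> a < 2 ^ length ps \<Longrightarrow> qread n ps (qwrite n ps j a) = a"
proof (induction ps arbitrary: a)
  case Nil then show ?case by simp
next
  case (Cons p ps)
  let ?L = "length ps"
  have p: "p < n" "p \<notin> set ps" using Cons.prems by auto
  have "qread n ps (qwrite n (p # ps) j a) = qread n ps (qwrite n ps j (a mod 2 ^ ?L))"
    by (rule qread_cong) (use Cons.prems in \<open>auto simp: setq_bit subset_iff\<close>)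
  also have "\<dots> = a mod 2 ^ ?L" using Cons by simp
  finally have 1: "qread n ps (qwrite n (p # ps) j a) = a mod 2 ^ ?L" .
  have 2: "qbit n (qwrite n (p # ps) j a) p = (a div 2 ^ ?L = 1)" using p by (simp add: setq_bit)
  have "a div 2 ^ ?L < 2" using Cons.prems(3) by (simp add: less_mult_imp_div_less)
  then have "a div 2 ^ ?L = 0 \<or> a div 2 ^ ?L = 1" by linarith
  moreover have "a = a div 2 ^ ?L * 2 ^ ?L + a mod 2 ^ ?L" by (metis div_mult_mod_eq)
  ultimately show ?case using 1 2 by (auto simp: qread_Cons)
qed

lemma qidx_ext:
  assumes "i < 2 ^ n" "j < 2 ^ n" "\<forall>p<n. p \<notin> set ps \<longrightarrow> qbit n i p = qbit n j p"
    "qread n ps i = qread n ps j"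
  shows "i = j"
  using qread_inj[OF assms(4)] assms by (intro idx_eq) auto

lemma lift_carrier: "lift n ps U \<in> carrier_mat (2 ^ n) (2 ^ n)"
  by (simp add: lift_def)

lemma lift_entry: "i < 2 ^ n \<Longrightarrow> j < 2 ^ n \<Longrightarrow> lift n ps U $$ (i, j) =
  (if (\<forall>p<n. p \<notin> set ps \<longrightarrow> qbit n i p = qbit n j p) then U $$ (qread n ps i, qread n ps j) else 0)"
  by (simp add: lift_def)

lemma lift_col_sum:
  assumes ps: "set ps \<subseteq> {..<n}" "distinct ps" and j: "j < 2 ^ n" and h0: "\<And>i. h i 0 = 0"
  shows "(\<Sum>i<2 ^ n. h i (lift n ps U $$ (i, j))) =
         (\<Sum>a<2 ^ length ps. h (qwrite n ps j a) (U $$ (a, qread n ps j)))"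
proof -
  define F where "F = {i. i < 2 ^ n \<and> (\<forall>p<n. p \<notin> set ps \<longrightarrow> qbit n i p = qbit n j p)}"
  have "(\<Sum>i<2 ^ n. h i (lift n ps U $$ (i, j))) = (\<Sum>i\<in>F. h i (lift n ps U $$ (i, j)))"
    by (rule sum.mono_neutral_right) (auto simp: F_def lift_entry j h0)
  also have "\<dots> = (\<Sum>i\<in>F. h i (U $$ (qread n ps i, qread n ps j)))"
    by (rule sum.cong) (auto simp: F_def lift_entry j)
  also have "\<dots> = (\<Sum>a<2 ^ length ps. h (qwrite n ps j a) (U $$ (qread n ps (qwrite n ps j a), qread n ps j)))"
  proof (rule sum.reindex_bij_betw[symmetric, where h = "qwrite n ps j", unfolded comp_def])
    show "bij_betw (qwrite n ps j) {..<2 ^ length ps} F"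
    proof (rule bij_betw_byWitness[where f' = "qread n ps"])
      show "\<forall>a\<in>{..<2 ^ length ps}. qread n ps (qwrite n ps j a) = a" using qwrite_read ps by auto
      show "\<forall>a'\<in>F. qwrite n ps j (qread n ps a') = a'"
      proof
        fix i assume i: "i \<in> F"
        show "qwrite n ps j (qread n ps i) = i"
          by (rule qidx_ext[where ps = ps])
             (use i ps j in \<open>auto simp: F_def qwrite_less qwrite_out qwrite_read qread_less\<close>)
      qed
      show "qwrite n ps j ` {..<2 ^ length ps} \<subseteq> F"
        using ps j by (auto simp: F_def qwrite_less qwrite_out)
      show "qread n ps ` F \<subseteq> {..<2 ^ length ps}" using qread_less by auto
    qed
  qed
  also have "\<dots> = (\<Sum>a<2 ^ length ps. h (qwrite n ps j a) (U $$ (a, qread n ps j)))"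
    by (rule sum.cong) (use qwrite_read ps in auto)
  finally show ?thesis .
qed

definition wt :: "complex mat \<Rightarrow> nat \<Rightarrow> nat \<Rightarrow> real" where
  "wt M k x = (cmod (M $$ (k, x)))\<^sup>2"

lemma wt_nonneg: "wt M k x \<ge> 0" by (simp add: wt_def)

lemma sum_single_sq:
  assumes "finite A" "\<forall>k\<in>A. \<forall>k'\<in>A. f k \<noteq> 0 \<longrightarrow> f k' \<noteq> 0 \<longrightarrow> k = k'"
  shows "(cmod (sum f A))\<^sup>2 = (\<Sum>k\<in>A. (cmod (f k))\<^sup>2)"
proof (cases "\<exists>k0\<in>A. f k0 \<noteq> 0")
  case True
  then obtain k0 where k0: "k0 \<in> A" "f k0 \<noteq> 0" by blast
  have z: "\<forall>k\<in>A - {k0}. f k = 0" using assms(2) k0 by blast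
  have "sum f A = f k0"
    using sum.remove[OF assms(1) k0(1), of f] z by simp
  moreover have "(\<Sum>k\<in>A. (cmod (f k))\<^sup>2) = (cmod (f k0))\<^sup>2"
    using sum.remove[OF assms(1) k0(1), of "\<lambda>k. (cmod (f k))\<^sup>2"] z by simp
  ultimately show ?thesis by simp
next
  case False
  then show ?thesis by simp
qed

lemma mult_entry: "G \<in> carrier_mat d d \<Longrightarrow> M \<in> carrier_mat d d \<Longrightarrow> i < d \<Longrightarrow> x < d \<Longrightarrow>
  (G * M) $$ (i, x) = (\<Sum>k<d. G $$ (i, k) * M $$ (k, x))"
  by (simp add: index_mult_mat scalar_prod_def lessThan_atLeast0 row_def col_def)

lemma mult_wt:
  assumes "G \<in> carrier_mat d d" "M \<in> carrier_mat d d" "i < d" "x < d"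
    and one: "\<forall>k<d. \<forall>k'<d. G $$ (i, k) \<noteq> 0 \<longrightarrow> M $$ (k, x) \<noteq> 0 \<longrightarrow>
                G $$ (i, k') \<noteq> 0 \<longrightarrow> M $$ (k', x) \<noteq> 0 \<longrightarrow> k = k'"
  shows "wt (G * M) i x = (\<Sum>k<d. wt G i k * wt M k x)"
proof -
  have "wt (G * M) i x = (cmod (\<Sum>k<d. G $$ (i, k) * M $$ (k, x)))\<^sup>2"
    unfolding wt_def by (subst mult_entry[OF assms(1-4)]) (rule refl)
  also have "\<dots> = (\<Sum>k<d. (cmod (G $$ (i, k) * M $$ (k, x)))\<^sup>2)"
    by (rule sum_single_sq) (use one in auto)
  also have "\<dots> = (\<Sum>k<d. wt G i k * wt M k x)"
    by (simp add: wt_def norm_mult power_mult_distrib)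
  finally show ?thesis .
qed

lemma gate_bound:
  assumes G: "G \<in> carrier_mat d d" and M: "M \<in> carrier_mat d d" and x: "x < d"
    and one: "\<forall>i<d. \<forall>k<d. \<forall>k'<d. G $$ (i, k) \<noteq> 0 \<longrightarrow> M $$ (k, x) \<noteq> 0 \<longrightarrow>
                G $$ (i, k') \<noteq> 0 \<longrightarrow> M $$ (k', x) \<noteq> 0 \<longrightarrow> k = k'"
    and S: "S \<subseteq> {..<d}" and S': "S' \<subseteq> {..<d}" and c: "c \<ge> 0"
    and col: "\<And>k. k \<in> S \<Longrightarrow> M $$ (k, x) \<noteq> 0 \<Longrightarrow> (\<Sum>i\<in>S'. wt G i k) \<ge> c"
  shows "(\<Sum>i\<in>S'. wt (G * M) i x) \<ge> c * (\<Sum>k\<in>S. wt M k x)"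
proof -
  have "(\<Sum>k\<in>S. wt M k x * c) \<le> (\<Sum>k\<in>S. wt M k x * (\<Sum>i\<in>S'. wt G i k))"
  proof (rule sum_mono)
    fix k assume k: "k \<in> S"
    show "wt M k x * c \<le> wt M k x * (\<Sum>i\<in>S'. wt G i k)"
    proof (cases "M $$ (k, x) = 0")
      case True then show ?thesis by (simp add: wt_def)
    next
      case False then show ?thesis using col[OF k] by (simp add: mult_left_mono wt_nonneg)
    qed
  qed
  also have "\<dots> \<le> (\<Sum>k<d. wt M k x * (\<Sum>i\<in>S'. wt G i k))"
    by (rule sum_mono2) (use S in \<open>auto intro!: mult_nonneg_nonneg sum_nonneg wt_nonneg\<close>)
  also have "\<dots> = (\<Sum>i\<in>S'. \<Sum>k<d. wt G i k * wt M k x)"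
    by (subst sum.swap) (simp add: sum_distrib_left mult.commute)
  also have "\<dots> = (\<Sum>i\<in>S'. wt (G * M) i x)"
    by (rule sum.cong) (use S' one in \<open>auto intro!: mult_wt[OF G M _ x, symmetric]\<close>)
  finally show ?thesis by (simp add: sum_distrib_left mult.commute)
qed

lemma peel:
  fixes g f :: "nat \<Rightarrow> real"
  assumes ps: "set ps \<subseteq> {..<n}" "distinct ps"
    and ginv: "\<And>i j. i < 2 ^ n \<Longrightarrow> j < 2 ^ n \<Longrightarrow> (\<forall>p<n. p \<notin> set ps \<longrightarrow> qbit n i p = qbit n j p) \<Longrightarrow> g i = g j"
  shows "(\<Sum>x<2 ^ n. g x * f (qread n ps x)) = (\<Sum>a<2 ^ length ps. f a) / 2 ^ length ps * (\<Sum>x<2 ^ n. g x)"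
proof -
  let ?L = "length ps"
  define Fib where "Fib a = {x \<in> {..<2 ^ n}. qread n ps x = a}" for a
  define C where "C = sum g (Fib 0)"
  have fib: "sum g (Fib a) = C" if a: "a < 2 ^ ?L" for a :: nat
  proof -
    have "sum g (Fib a) = (\<Sum>x\<in>Fib 0. g (qwrite n ps x a))"
    proof (rule sum.reindex_bij_betw[symmetric])
      show "bij_betw (\<lambda>x. qwrite n ps x a) (Fib 0) (Fib a)"
      proof (rule bij_betw_byWitness[where f' = "\<lambda>x. qwrite n ps x 0"])
        show "\<forall>x\<in>Fib 0. qwrite n ps (qwrite n ps x a) 0 = x"
        proof
          fix x assume x: "x \<in> Fib 0"
          show "qwrite n ps (qwrite n ps x a) 0 = x"
            by (rule qidx_ext[where ps = ps]) (use x ps a in \<open>auto simp: Fib_def qwrite_less qwrite_out qwrite_read\<close>)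
        qed
        show "\<forall>x\<in>Fib a. qwrite n ps (qwrite n ps x 0) a = x"
        proof
          fix x assume x: "x \<in> Fib a"
          show "qwrite n ps (qwrite n ps x 0) a = x"
            by (rule qidx_ext[where ps = ps]) (use x ps a in \<open>auto simp: Fib_def qwrite_less qwrite_out qwrite_read\<close>)
        qed
        show "(\<lambda>x. qwrite n ps x a) ` Fib 0 \<subseteq> Fib a"
          using ps a by (auto simp: Fib_def qwrite_less qwrite_read)
        show "(\<lambda>x. qwrite n ps x 0) ` Fib a \<subseteq> Fib 0"
          using ps by (auto simp: Fib_def qwrite_less qwrite_read)
      qed
    qed
    also have "\<dots> = sum g (Fib 0)"
    proof (rule sum.cong[OF refl])
      fix x assume x: "x \<in> Fib 0"
      show "g (qwrite n ps x a) = g x"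
        using x ps by (auto simp: Fib_def qwrite_less qwrite_out intro!: ginv)
    qed
    finally show ?thesis by (simp add: C_def)
  qed
  have grp: "(\<Sum>x<2 ^ n. h x) = (\<Sum>a<2 ^ ?L. sum h (Fib a))" for h :: "nat \<Rightarrow> real"
    unfolding Fib_def by (rule sum.group[symmetric]) (auto simp: qread_less)
  have "(\<Sum>x<2 ^ n. g x * f (qread n ps x)) = (\<Sum>a<2 ^ ?L. \<Sum>x\<in>Fib a. g x * f (qread n ps x))"
    by (rule grp)
  also have "\<dots> = (\<Sum>a<2 ^ ?L. f a * C)"
  proof (rule sum.cong[OF refl])
    fix a :: nat assume "a \<in> {..<2 ^ ?L}"
    then have "(\<Sum>x\<in>Fib a. g x * f (qread n ps x)) = (\<Sum>x\<in>Fib a. g x * f a)"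
      by (intro sum.cong) (auto simp: Fib_def)
    also have "\<dots> = f a * C" using fib \<open>a \<in> _\<close> by (simp add: sum_distrib_left[symmetric] mult.commute)
    finally show "(\<Sum>x\<in>Fib a. g x * f (qread n ps x)) = f a * C" .
  qed
  also have "\<dots> = (\<Sum>a<2 ^ ?L. f a) * C" by (simp add: sum_distrib_right)
  finally have 1: "(\<Sum>x<2 ^ n. g x * f (qread n ps x)) = (\<Sum>a<2 ^ ?L. f a) * C" .
  have "(\<Sum>x<2 ^ n. g x) = (\<Sum>a<2 ^ ?L. sum g (Fib a))" by (rule grp)
  also have "\<dots> = 2 ^ ?L * C" using fib by simp
  finally have 2: "(\<Sum>x<2 ^ n. g x) = 2 ^ ?L * C" .
  show ?thesis using 1 2 by simp
qed

lemma count_half: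
  assumes "n \<ge> 1"
  shows "(\<Sum>x<2 ^ n. (if qbit n x 0 then 0 else 1 :: real)) = 2 ^ (n - 1)"
proof -
  have q: "qread n [0] x = (if qbit n x 0 then 1 else 0)" for x by (simp add: qread_Cons)
  have "(\<Sum>x<(2::nat) ^ n. (\<lambda>_. 1::real) x * (\<lambda>a. if a = 0 then 1 else 0 :: real) (qread n [0] x)) =
        (\<Sum>a<(2::nat) ^ length [0::nat]. (\<lambda>a. if a = 0 then 1 else 0 :: real) a) / 2 ^ length [0::nat] * (\<Sum>x<(2::nat) ^ n. (\<lambda>_. 1::real) x)"
    by (rule peel) (use assms in auto)
  moreover have "(\<Sum>x<(2::nat) ^ n. (\<lambda>_. 1::real) x * (\<lambda>a. if a = 0 then 1 else 0 :: real) (qread n [0] x))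
     = (\<Sum>x<2 ^ n. (if qbit n x 0 then 0 else 1 :: real))"
    by (rule sum.cong) (auto simp: q)
  ultimately have "(\<Sum>x<2 ^ n. (if qbit n x 0 then 0 else 1 :: real)) = 2 ^ n / 2"
    by simp
  also have "\<dots> = 2 ^ (n - 1)" using assms by (cases n) auto
  finally show ?thesis .
qed

lemma prod_sum:
  fixes f :: "nat \<Rightarrow> nat \<Rightarrow> real"
  assumes n: "n \<ge> 1"
    and P: "\<And>t. t < T \<Longrightarrow> set (P t) \<subseteq> {..<n} \<and> distinct (P t) \<and> 0 \<notin> set (P t)"
    and disj: "\<And>t s. t < T \<Longrightarrow> s < T \<Longrightarrow> t \<noteq> s \<Longrightarrow> set (P t) \<inter> set (P s) = {}"
  shows "(\<Sum>x<2 ^ n. (if qbit n x 0 then 0 else 1) * (\<Prod>t<T. f t (qread n (P t) x))) =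
         2 ^ (n - 1) * (\<Prod>t<T. (\<Sum>a<2 ^ length (P t). f t a) / 2 ^ length (P t))"
  using P disj
proof (induction T)
  case 0
  then show ?case using count_half[OF n] by simp
next
  case (Suc T)
  let ?g = "\<lambda>x. (if qbit n x 0 then 0 else 1) * (\<Prod>t<T. f t (qread n (P t) x))"
  have PT: "set (P T) \<subseteq> {..<n}" "distinct (P T)" "0 \<notin> set (P T)" using Suc.prems(1)[of T] by auto
  have "(\<Sum>x<2 ^ n. (if qbit n x 0 then 0 else 1) * (\<Prod>t<Suc T. f t (qread n (P t) x))) =
        (\<Sum>x<2 ^ n. ?g x * f T (qread n (P T) x))"
    by (simp add: mult.assoc)
  also have "\<dots> = (\<Sum>a<2 ^ length (P T). f T a) / 2 ^ length (P T) * (\<Sum>x<2 ^ n. ?g x)"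
  proof (rule peel[OF PT(1,2)])
    fix i j assume ij: "i < 2 ^ n" "j < 2 ^ n" and ag: "\<forall>p<n. p \<notin> set (P T) \<longrightarrow> qbit n i p = qbit n j p"
    have "qbit n i 0 = qbit n j 0" using ag PT(3) n by auto
    moreover have "qread n (P t) i = qread n (P t) j" if t: "t < T" for t
    proof (rule qread_cong, intro ballI)
      fix p assume p: "p \<in> set (P t)"
      have "p \<notin> set (P T)" using Suc.prems(2)[of t T] t p by auto
      moreover have "p < n" using Suc.prems(1)[of t] t p by auto
      ultimately show "qbit n i p = qbit n j p" using ag by auto
    qed
    ultimately show "?g i = ?g j" by simp
  qed
  also have "(\<Sum>x<2 ^ n. ?g x) = 2 ^ (n - 1) * (\<Prod>t<T. (\<Sum>a<2 ^ length (P t). f t a) / 2 ^ length (P t))"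
    using Suc by simp
  finally show ?case by (simp add: mult_ac)
qed

lemma cadj_entry: "M \<in> carrier_mat d d \<Longrightarrow> i < d \<Longrightarrow> j < d \<Longrightarrow> cadj M $$ (i, j) = cnj (M $$ (j, i))"
  by (simp add: cadj_def)

lemma p_acc_formula:
  assumes M: "M \<in> carrier_mat (2 ^ n) (2 ^ n)" and n: "n \<ge> 1"
  shows "p_acc n M 1 = (\<Sum>i<2 ^ n. \<Sum>x<2 ^ n. (if qbit n i 0 then 0 else 1) * (if qbit n x 0 then 0 else 1) * wt M i x) / 2 ^ (n - 1)"
proof -
  let ?d = "2 ^ n :: nat"
  let ?P = "Pi_acc n" and ?r = "rho_init n 1"
  have Pc: "?P \<in> carrier_mat ?d ?d" and rc: "?r \<in> carrier_mat ?d ?d" by (auto simp: Pi_acc_def rho_init_def)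
  have PM: "(?P * M) $$ (i, k) = (if qbit n i 0 then 0 else M $$ (i, k))" if "i < ?d" "k < ?d" for i k
  proof -
    have "(?P * M) $$ (i, k) = (\<Sum>j<?d. ?P $$ (i, j) * M $$ (j, k))" by (rule mult_entry[OF Pc M that])
    also have "\<dots> = (\<Sum>j<?d. if j = i then (if qbit n i 0 then 0 else M $$ (i, k)) else 0)"
      by (rule sum.cong) (auto simp: Pi_acc_def that)
    finally show ?thesis using that by simp
  qed
  have PMc: "?P * M \<in> carrier_mat ?d ?d" using Pc M by auto
  have PMr: "(?P * M * ?r) $$ (i, x) = (if qbit n i 0 then 0 else M $$ (i, x)) * (if qbit n x 0 then 0 else 1 / 2 ^ (n - 1))"
    if "i < ?d" "x < ?d" for i x
  proof -
    have "(?P * M * ?r) $$ (i, x) = (\<Sum>k<?d. (?P * M) $$ (i, k) * ?r $$ (k, x))" by (rule mult_entry[OF PMc rc that])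
    also have "\<dots> = (\<Sum>k<?d. if k = x then (if qbit n i 0 then 0 else M $$ (i, x)) * (if qbit n x 0 then 0 else 1 / 2 ^ (n - 1)) else 0)"
      by (rule sum.cong) (auto simp: rho_init_def PM that)
    finally show ?thesis using that by simp
  qed
  have PMrc: "?P * M * ?r \<in> carrier_mat ?d ?d" using PMc rc by auto
  have cc: "cadj M \<in> carrier_mat ?d ?d" using M by (simp add: cadj_def)
  have diag: "(?P * M * ?r * cadj M) $$ (i, i) =
     (\<Sum>x<?d. of_real ((if qbit n i 0 then 0 else 1) * (if qbit n x 0 then 0 else 1) * wt M i x / 2 ^ (n - 1)))"
    if i: "i < ?d" for i
  proof -
    have "(?P * M * ?r * cadj M) $$ (i, i) = (\<Sum>x<?d. (?P * M * ?r) $$ (i, x) * cadj M $$ (x, i))"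
      by (rule mult_entry[OF PMrc cc i i])
    also have "\<dots> = (\<Sum>x<?d. of_real ((if qbit n i 0 then 0 else 1) * (if qbit n x 0 then 0 else 1) * wt M i x / 2 ^ (n - 1)))"
    proof (rule sum.cong[OF refl])
      fix x assume "x \<in> {..<?d}"
      then have x: "x < ?d" by simp
      have "M $$ (i, x) * cnj (M $$ (i, x)) = of_real (wt M i x)"
        by (simp add: wt_def complex_mult_cnj cmod_power2)
      then show "(?P * M * ?r) $$ (i, x) * cadj M $$ (x, i) = of_real ((if qbit n i 0 then 0 else 1) * (if qbit n x 0 then 0 else 1) * wt M i x / 2 ^ (n - 1))"
        using x i by (subst PMr[OF i x]) (simp add: cadj_entry[OF M])
    qed
    finally show ?thesis .
  qed
  have "mtrace (?P * M * ?r * cadj M) = (\<Sum>i<?d. (?P * M * ?r * cadj M) $$ (i, i))"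
    using PMrc cc Pc by (simp add: mtrace_def)
  also have "\<dots> = (\<Sum>i<?d. \<Sum>x<?d. of_real ((if qbit n i 0 then 0 else 1) * (if qbit n x 0 then 0 else 1) * wt M i x / 2 ^ (n - 1)))"
    by (rule sum.cong[OF refl], rule diag) simp
  finally have "p_acc n M 1 = (\<Sum>i<?d. \<Sum>x<?d. (if qbit n i 0 then 0 else 1) * (if qbit n x 0 then 0 else 1) * wt M i x / 2 ^ (n - 1))"
    by (simp add: p_acc_def)
  then show ?thesis by (simp add: sum_divide_distrib)
qed

lemma lift_nz:
  assumes "i < 2 ^ n" "k < 2 ^ n" "lift n ps U $$ (i, k) \<noteq> 0"
  shows "(\<forall>p<n. p \<notin> set ps \<longrightarrow> qbit n i p = qbit n k p) \<and> U $$ (qread n ps i, qread n ps k) \<noteq> 0"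
  using assms by (auto simp: lift_entry split: if_splits)

lemma lift_one:
  assumes ps: "set ps \<subseteq> {..<n}" "distinct ps"
    and U: "\<And>a c c'. a < 2 ^ length ps \<Longrightarrow> c < 2 ^ length ps \<Longrightarrow> c' < 2 ^ length ps \<Longrightarrow>
              U $$ (a, c) \<noteq> 0 \<Longrightarrow> U $$ (a, c') \<noteq> 0 \<Longrightarrow> c = c'"
    and ik: "i < 2 ^ n" "k < 2 ^ n" "k' < 2 ^ n" "lift n ps U $$ (i, k) \<noteq> 0" "lift n ps U $$ (i, k') \<noteq> 0"
  shows "k = k'"
proof -
  note a = lift_nz[OF ik(1,2,4)] and b = lift_nz[OF ik(1,3,5)]
  have "qread n ps k = qread n ps k'"
    using U[OF qread_less qread_less qread_less conjunct2[OF a] conjunct2[OF b]] .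
  moreover have "\<forall>p<n. p \<notin> set ps \<longrightarrow> qbit n k p = qbit n k' p"
  proof (intro allI impI)
    fix p assume "p < n" "p \<notin> set ps"
    then have "qbit n i p = qbit n k p" "qbit n i p = qbit n k' p" using a b by blast+
    then show "qbit n k p = qbit n k' p" by simp
  qed
  ultimately show ?thesis using ik by (rule_tac qidx_ext[where ps = ps]) auto
qed

lemma mult_nz:
  assumes "G \<in> carrier_mat d d" "M \<in> carrier_mat d d" "i < d" "x < d" "(G * M) $$ (i, x) \<noteq> 0"
  shows "\<exists>k<d. G $$ (i, k) \<noteq> 0 \<and> M $$ (k, x) \<noteq> 0"
proof (rule ccontr)
  assume "\<not> ?thesis"
  then have "(\<Sum>k<d. G $$ (i, k) * M $$ (k, x)) = 0" by (intro sum.neutral) auto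
  then show False using assms(5) mult_entry[OF assms(1-4)] by simp
qed

definition cnot_t :: "nat \<Rightarrow> nat" where "cnot_t c = (if c < 2 then c else 5 - c)"

lemma CNOT_entry: assumes "a < 4" "c < 4" shows "CNOT $$ (a, c) = (if a = cnot_t c then 1 else 0)"
proof -
  have "a = 0 \<or> a = 1 \<or> a = 2 \<or> a = 3" "c = 0 \<or> c = 1 \<or> c = 2 \<or> c = 3" using assms by linarith+
  have e: "CNOT $$ (a, c) = (if a < 2 ^ 1 \<and> c < 2 ^ 1 then (if a = c then 1 else 0)
     else if 2 ^ 1 \<le> a \<and> 2 ^ 1 \<le> c then pauli_X $$ (a - 2 ^ 1, c - 2 ^ 1) else 0)"
  proof -
    have l: "a < 2 ^ (1 + 1)" "c < 2 ^ (1 + 1)" using assms by simp_all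
    show ?thesis unfolding CNOT_def controlled_def by (simp only: index_mat(1)[OF l] case_prod_conv)
  qed
  have px: "pauli_X $$ (u, v) = (if u \<noteq> v then 1 else 0)" if "u < 2" "v < 2" for u v
    unfolding pauli_X_def using that by (simp only: index_mat(1) case_prod_conv)
  show ?thesis using \<open>c = 0 \<or> _\<close> \<open>a = 0 \<or> _\<close> unfolding e cnot_t_def
    by (elim disjE) (simp_all add: px)
qed

lemma CNOT_carrier: "CNOT \<in> carrier_mat 4 4"
  by (simp add: CNOT_def controlled_def)

lemma cnot_t_props: "c < 4 \<Longrightarrow> cnot_t c < 4 \<and> cnot_t c div 2 = c div 2"
proof -
  assume "c < 4"
  then have "c = 0 \<or> c = 1 \<or> c = 2 \<or> c = 3" by linarith
  then show ?thesis by (auto simp: cnot_t_def)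
qed

lemma cnot_t_inj: "c < 4 \<Longrightarrow> c' < 4 \<Longrightarrow> cnot_t c = cnot_t c' \<Longrightarrow> c = c'"
  by (auto simp: cnot_t_def less_Suc_eq numeral_eq_Suc split: if_splits)

definition cu_t :: "nat \<Rightarrow> nat \<Rightarrow> nat" where
  "cu_t L c = (if c < 2 ^ L then c else 2 ^ L + (c - 2 ^ L + 1) mod 2 ^ L)"

lemma CU_entry:
  assumes a: "a < 2 ^ Suc L" and c: "c < 2 ^ Suc L"
  shows "controlled L (incr (2 ^ L)) $$ (a, c) = (if a = cu_t L c then 1 else 0)"
proof -
  have e: "controlled L (incr (2 ^ L)) $$ (a, c) = (if a < 2 ^ L \<and> c < 2 ^ L then (if a = c then 1 else 0)
     else if 2 ^ L \<le> a \<and> 2 ^ L \<le> c then incr (2 ^ L) $$ (a - 2 ^ L, c - 2 ^ L) else 0)"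
    unfolding controlled_def using a c by (simp only: index_mat(1) Suc_eq_plus1 case_prod_conv)
  show ?thesis
  proof (cases "c < 2 ^ L")
    case True
    then show ?thesis unfolding e by (auto simp: cu_t_def)
  next
    case False
    have a2: "a - 2 ^ L < 2 ^ L" "c - 2 ^ L < 2 ^ L" using a c by auto
    have m: "(c - 2 ^ L + 1) mod 2 ^ L < (2::nat) ^ L" by simp
    show ?thesis
    proof (cases "a < 2 ^ L")
      case True
      then show ?thesis unfolding e using False m by (auto simp: cu_t_def)
    next
      case False2: False
      have "incr (2 ^ L) $$ (a - 2 ^ L, c - 2 ^ L) = (if a - 2 ^ L = (c - 2 ^ L + 1) mod 2 ^ L then 1 else 0)"
        unfolding incr_def using a2 by (simp only: index_mat(1) case_prod_conv)
      then show ?thesis unfolding e using False False2 by (auto simp: cu_t_def)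
    qed
  qed
qed

lemma CU_carrier: "controlled L (incr (2 ^ L)) \<in> carrier_mat (2 ^ Suc L) (2 ^ Suc L)"
  by (simp add: controlled_def)

lemma mod_suc_inj: "u < (M::nat) \<Longrightarrow> v < M \<Longrightarrow> (u + 1) mod M = (v + 1) mod M \<Longrightarrow> u = v"
proof -
  assume a: "u < M" "v < M" "(u + 1) mod M = (v + 1) mod M"
  have e: "(x + 1) mod M = (if x + 1 = M then 0 else x + 1)" if "x < M" for x
    using that by auto
  show "u = v" using a e[OF a(1)] e[OF a(2)] by (auto split: if_splits)
qed

lemma cu_t_props: "c < 2 ^ Suc L \<Longrightarrow> cu_t L c < 2 ^ Suc L \<and> (cu_t L c < 2 ^ L \<longleftrightarrow> c < 2 ^ L)"
proof (cases "c < 2 ^ L")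
  case True
  then show ?thesis by (simp add: cu_t_def)
next
  case False
  have "(c - 2 ^ L + 1) mod 2 ^ L < (2::nat) ^ L" by simp
  then show ?thesis using False by (simp add: cu_t_def)
qed

lemma cu_t_inj: "c < 2 ^ Suc L \<Longrightarrow> c' < 2 ^ Suc L \<Longrightarrow> cu_t L c = cu_t L c' \<Longrightarrow> c = c'"
proof -
  assume a: "c < 2 ^ Suc L" "c' < 2 ^ Suc L" "cu_t L c = cu_t L c'"
  have same: "c < 2 ^ L \<longleftrightarrow> c' < 2 ^ L" using cu_t_props[OF a(1)] cu_t_props[OF a(2)] a(3) by metis
  have p2: "(2::nat) ^ Suc L = 2 ^ L + 2 ^ L" by simp
  show "c = c'"
  proof (cases "c < 2 ^ L")
    case True
    then have "cu_t L c = c" "cu_t L c' = c'" using same unfolding cu_t_def by (simp_all only: if_True)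
    then show ?thesis using a(3) by metis
  next
    case False
    then have F': "\<not> c' < 2 ^ L" using same by blast
    have "cu_t L c = 2 ^ L + (c - 2 ^ L + 1) mod 2 ^ L" "cu_t L c' = 2 ^ L + (c' - 2 ^ L + 1) mod 2 ^ L"
      using False F' unfolding cu_t_def by (simp_all only: if_False)
    then have eq: "(c - 2 ^ L + 1) mod 2 ^ L = (c' - 2 ^ L + 1) mod 2 ^ L" using a(3) by linarith
    have l1: "c - 2 ^ L < 2 ^ L" using a(1) p2 by linarith
    have l2: "c' - 2 ^ L < 2 ^ L" using a(2) p2 by linarith
    have e: "c - 2 ^ L = c' - 2 ^ L" by (rule mod_suc_inj[OF l1 l2 eq])
    have "c = (c - 2 ^ L) + 2 ^ L" "c' = (c' - 2 ^ L) + 2 ^ L" using False F' by simp_all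
    then show ?thesis using e by metis
  qed
qed

lemma qread_two: "qread n [p, q] i = (if qbit n i p then 2 else 0) + (if qbit n i q then 1 else 0)"
  by (simp add: qread_Cons)

lemma qwrite_head: "p < n \<Longrightarrow> qbit n (qwrite n (p # ps) j a) p = (a div 2 ^ length ps = 1)"
  by (simp add: setq_bit)

locale r1 =
  fixes w m :: nat and Q :: "complex mat"
  assumes w1: "w \<ge> 1" and QU: "is_circuit w Q"
begin

definition "nq = R1_nqubits w m"
definition "l = m + 1"
definition "N2 = 2 * 2 ^ m"
definition "base t = l + 1 + t * w"
definition "Rp t = [base t ..< base t + (w - 1)]"
definition "Xp t = base t + (w - 1)"
definition "gQ t = lift nq (l # Rp t) Q"
definition "gC t = lift nq [l, Xp t] CNOT"
definition "gI = lift nq (l # [0..<l]) (controlled l (incr (2 ^ l)))"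
definition "d = (2::nat) ^ nq"

lemma N2_l: "N2 = 2 ^ l" by (simp add: N2_def l_def)

lemma nq_eq: "nq = l + 1 + N2 * w" by (simp add: nq_def R1_nqubits_def l_def N2_def)

lemma step_eq: "R1_step w m Q t = gI * gC t * gQ t"
  by (simp add: R1_step_def Let_def gI_def gC_def gQ_def nq_def l_def Rp_def Xp_def base_def power_Suc)

lemma base_bound: "t < N2 \<Longrightarrow> base t + w \<le> nq"
proof -
  assume "t < N2"
  then have "Suc t * w \<le> N2 * w" by (intro mult_right_mono) auto
  then show ?thesis by (simp add: base_def nq_eq)
qed

lemma Xp_lt: "t < N2 \<Longrightarrow> Xp t < nq" using base_bound w1 by (fastforce simp: Xp_def)
lemma l_lt: "l < nq" by (simp add: nq_eq)
lemma Rp_set: "set (Rp t) = {base t ..< base t + (w - 1)}" by (simp add: Rp_def)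
lemma Rp_sub: "t < N2 \<Longrightarrow> set (Rp t) \<subseteq> {..<nq}" using base_bound by (fastforce simp: Rp_set)
lemma l_base: "l < base t" by (simp add: base_def)
lemma base_Suc: "base (Suc t) = Xp t + 1" using w1 by (simp add: base_def Xp_def)
lemma Xp_base: "base t \<le> Xp t" by (simp add: Xp_def)
lemma l_notin_Rp: "l \<notin> set (Rp t)" using l_base[of t] by (simp add: Rp_set)
lemma Xp_notin_Rp: "Xp t \<notin> set (Rp t)" by (simp add: Rp_set Xp_def)

lemma gQ_ps: "t < N2 \<Longrightarrow> set (l # Rp t) \<subseteq> {..<nq} \<and> distinct (l # Rp t)"
  using Rp_sub l_lt l_notin_Rp by (simp add: Rp_def)
lemma gC_ps: "t < N2 \<Longrightarrow> set [l, Xp t] \<subseteq> {..<nq} \<and> distinct [l, Xp t]"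
  using Xp_lt l_lt l_base[of t] Xp_base[of t] by auto
lemma gI_ps: "set (l # [0..<l]) \<subseteq> {..<nq} \<and> distinct (l # [0..<l])"
  using l_lt by auto

lemma carriers: "gQ t \<in> carrier_mat d d" "gC t \<in> carrier_mat d d" "gI \<in> carrier_mat d d"
  by (simp_all add: gQ_def gC_def gI_def d_def lift_carrier)

lemma len_Rp: "length (Rp t) = w - 1" by (simp add: Rp_def)

lemma Qc: "Q \<in> carrier_mat (2 ^ w) (2 ^ w)" using QU by (simp add: is_circuit_def is_unitary_def)

definition "M0 t = R1_upto w m Q t"
definition "M1 t = gQ t * M0 t"
definition "M2 t = gC t * M1 t"

lemma M0_carrier: "M0 t \<in> carrier_mat d d"
proof (induction t)
  case 0 then show ?case by (simp add: M0_def d_def nq_def)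
next
  case (Suc t)
  have "gI * gC t * gQ t * M0 t \<in> carrier_mat d d" using carriers Suc.IH by (meson mult_carrier_mat)
  then show ?case by (simp add: M0_def step_eq)
qed

lemma M1_carrier: "M1 t \<in> carrier_mat d d" unfolding M1_def using carriers M0_carrier by (meson mult_carrier_mat)
lemma M2_carrier: "M2 t \<in> carrier_mat d d" unfolding M2_def using carriers M1_carrier by (meson mult_carrier_mat)

lemma M0_Suc: "M0 (Suc t) = gI * M2 t"
proof -
  have "M0 (Suc t) = gI * gC t * gQ t * M0 t" by (simp add: M0_def step_eq)
  also have "\<dots> = gI * (gC t * (gQ t * M0 t))"
    using carriers M0_carrier
    by (metis assoc_mult_mat mult_carrier_mat)
  finally show ?thesis by (simp add: M2_def M1_def)
qed

definition "Inv0 t \<longleftrightarrow> (\<forall>k<d. \<forall>x<d. M0 t $$ (k, x) \<noteq> 0 \<longrightarrow>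
   (\<forall>p. base t \<le> p \<longrightarrow> p < nq \<longrightarrow> qbit nq k p = qbit nq x p) \<and>
   qbit nq k l = (if t = 0 then qbit nq x l else (qbit nq k (Xp (t - 1)) \<noteq> qbit nq x (Xp (t - 1)))))"
definition "Inv1 t \<longleftrightarrow> (\<forall>k<d. \<forall>x<d. M1 t $$ (k, x) \<noteq> 0 \<longrightarrow>
   (\<forall>p. Xp t \<le> p \<longrightarrow> p < nq \<longrightarrow> qbit nq k p = qbit nq x p))"
definition "Inv2 t \<longleftrightarrow> (\<forall>k<d. \<forall>x<d. M2 t $$ (k, x) \<noteq> 0 \<longrightarrow>
   (\<forall>p. base (Suc t) \<le> p \<longrightarrow> p < nq \<longrightarrow> qbit nq k p = qbit nq x p) \<and>
   qbit nq k l = (qbit nq k (Xp t) \<noteq> qbit nq x (Xp t)))"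

lemma Inv0_0: "Inv0 0"
  unfolding Inv0_def M0_def by (auto simp: d_def nq_def)

lemma Inv01: assumes t: "t < N2" and I: "Inv0 t" shows "Inv1 t"
  unfolding Inv1_def
proof (rule allI, rule impI, rule allI, rule impI, rule impI)
  fix k x assume k: "k < d" and x: "x < d" and nz: "M1 t $$ (k, x) \<noteq> 0"
  obtain k' where k': "k' < d" "gQ t $$ (k, k') \<noteq> 0" "M0 t $$ (k', x) \<noteq> 0"
    using mult_nz[OF carriers(1) M0_carrier k x] nz by (auto simp: M1_def)
  have ag: "\<forall>p<nq. p \<notin> set (l # Rp t) \<longrightarrow> qbit nq k p = qbit nq k' p"
    using lift_nz[of k nq k' "l # Rp t" Q] k k'(1,2) by (simp add: gQ_def d_def)
  have I': "\<forall>p. base t \<le> p \<longrightarrow> p < nq \<longrightarrow> qbit nq k' p = qbit nq x p"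
    using I k'(1,3) x unfolding Inv0_def by blast
  show "\<forall>p. Xp t \<le> p \<longrightarrow> p < nq \<longrightarrow> qbit nq k p = qbit nq x p"
  proof (intro allI impI)
    fix p assume p: "Xp t \<le> p" "p < nq"
    have "p \<notin> set (l # Rp t)" using p l_base[of t] Xp_base[of t] by (auto simp: Rp_set Xp_def)
    then have "qbit nq k p = qbit nq k' p" using ag p by blast
    also have "\<dots> = qbit nq x p" using I' p Xp_base[of t] by simp
    finally show "qbit nq k p = qbit nq x p" .
  qed
qed

lemma cnot_bits:
  assumes "qread n [p, q] k = cnot_t (qread n [p, q] k')"
  shows "qbit n k p = qbit n k' p \<and> qbit n k q = (qbit n k' q \<noteq> qbit n k' p)"
  using assms unfolding qread_two cnot_t_def
  by (cases "qbit n k p"; cases "qbit n k q"; cases "qbit n k' p"; cases "qbit n k' q") simp_all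

lemma gC_nz: assumes "t < N2" "k < d" "k' < d" "gC t $$ (k, k') \<noteq> 0"
  shows "(\<forall>p<nq. p \<notin> set [l, Xp t] \<longrightarrow> qbit nq k p = qbit nq k' p) \<and>
         qbit nq k l = qbit nq k' l \<and> qbit nq k (Xp t) = (qbit nq k' (Xp t) \<noteq> qbit nq k' l)"
proof -
  note a = lift_nz[of k nq k' "[l, Xp t]" CNOT]
  have 1: "(\<forall>p<nq. p \<notin> set [l, Xp t] \<longrightarrow> qbit nq k p = qbit nq k' p)" "CNOT $$ (qread nq [l, Xp t] k, qread nq [l, Xp t] k') \<noteq> 0"
    using a assms by (simp_all add: gC_def d_def)
  have r4: "qread nq [l, Xp t] i < 4" for i using qread_less[of nq "[l, Xp t]" i] by simp
  have "qread nq [l, Xp t] k = cnot_t (qread nq [l, Xp t] k')"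
    using 1(2) CNOT_entry[OF r4 r4] by (simp split: if_splits)
  then show ?thesis using 1(1) cnot_bits by blast
qed

lemma Inv12: assumes t: "t < N2" and I: "Inv1 t" shows "Inv2 t"
  unfolding Inv2_def
proof (intro allI impI)
  fix k x assume k: "k < d" and x: "x < d" and nz: "M2 t $$ (k, x) \<noteq> 0"
  obtain k' where k': "k' < d" "gC t $$ (k, k') \<noteq> 0" "M1 t $$ (k', x) \<noteq> 0"
    using mult_nz[OF carriers(2) M1_carrier k x] nz by (auto simp: M2_def)
  note g = gC_nz[OF t k k'(1,2)]
  have I': "\<forall>p. Xp t \<le> p \<longrightarrow> p < nq \<longrightarrow> qbit nq k' p = qbit nq x p"
    using I k'(1,3) x unfolding Inv1_def by blast
  have xx: "qbit nq k' (Xp t) = qbit nq x (Xp t)" using I' Xp_lt[OF t] by simp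
  show "(\<forall>p. base (Suc t) \<le> p \<longrightarrow> p < nq \<longrightarrow> qbit nq k p = qbit nq x p) \<and>
        qbit nq k l = (qbit nq k (Xp t) \<noteq> qbit nq x (Xp t))"
  proof
    show "\<forall>p. base (Suc t) \<le> p \<longrightarrow> p < nq \<longrightarrow> qbit nq k p = qbit nq x p"
    proof (intro allI impI)
      fix p assume p: "base (Suc t) \<le> p" "p < nq"
      have "p \<notin> set [l, Xp t]" using p l_base[of t] Xp_base[of t] base_Suc[of t] by auto
      then have "qbit nq k p = qbit nq k' p" using g p by blast
      also have "\<dots> = qbit nq x p" using I' p base_Suc[of t] by simp
      finally show "qbit nq k p = qbit nq x p" .
    qed
    show "qbit nq k l = (qbit nq k (Xp t) \<noteq> qbit nq x (Xp t))"
      using g xx by auto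
  qed
qed

lemma qread_ctrl: "qread nq (l # [0..<l]) i = (if qbit nq i l then 2 ^ l else 0) + qread nq [0..<l] i"
  by (simp add: qread_Cons)

lemma qread_ctrl_less: "qread nq (l # [0..<l]) i < 2 ^ l \<longleftrightarrow> \<not> qbit nq i l"
  using qread_less[of nq "[0..<l]" i] by (simp add: qread_ctrl)

lemma gI_nz: assumes "k < d" "k' < d" "gI $$ (k, k') \<noteq> 0"
  shows "(\<forall>p<nq. p \<notin> set (l # [0..<l]) \<longrightarrow> qbit nq k p = qbit nq k' p) \<and> qbit nq k l = qbit nq k' l"
proof -
  note a = lift_nz[of k nq k' "l # [0..<l]" "controlled l (incr (2 ^ l))"]
  have 1: "(\<forall>p<nq. p \<notin> set (l # [0..<l]) \<longrightarrow> qbit nq k p = qbit nq k' p)"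
      "controlled l (incr (2 ^ l)) $$ (qread nq (l # [0..<l]) k, qread nq (l # [0..<l]) k') \<noteq> 0"
    using a assms by (simp_all add: gI_def d_def)
  have r: "qread nq (l # [0..<l]) i < 2 ^ Suc l" for i using qread_less[of nq "l # [0..<l]" i] by simp
  have e: "qread nq (l # [0..<l]) k = cu_t l (qread nq (l # [0..<l]) k')"
    using 1(2) CU_entry[OF r r] by (simp split: if_splits)
  have "qbit nq k l = qbit nq k' l"
    using cu_t_props[OF r[of k']] qread_ctrl_less[of k] qread_ctrl_less[of k'] e by metis
  then show ?thesis using 1(1) by blast
qed

lemma Inv20: assumes t: "t < N2" and I: "Inv2 t" shows "Inv0 (Suc t)"
  unfolding Inv0_def
proof (intro allI impI)
  fix k x assume k: "k < d" and x: "x < d" and nz: "M0 (Suc t) $$ (k, x) \<noteq> 0"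
  obtain k' where k': "k' < d" "gI $$ (k, k') \<noteq> 0" "M2 t $$ (k', x) \<noteq> 0"
    using mult_nz[OF carriers(3) M2_carrier k x] nz by (auto simp: M0_Suc)
  note g = gI_nz[OF k k'(1,2)]
  have I': "(\<forall>p. base (Suc t) \<le> p \<longrightarrow> p < nq \<longrightarrow> qbit nq k' p = qbit nq x p) \<and>
        qbit nq k' l = (qbit nq k' (Xp t) \<noteq> qbit nq x (Xp t))"
    using I k'(1,3) x unfolding Inv2_def by blast
  have "Xp t \<notin> set (l # [0..<l])" using l_base[of t] Xp_base[of t] by auto
  then have xx: "qbit nq k (Xp t) = qbit nq k' (Xp t)" using g Xp_lt[OF t] by blast
  show "(\<forall>p. base (Suc t) \<le> p \<longrightarrow> p < nq \<longrightarrow> qbit nq k p = qbit nq x p) \<and>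
        qbit nq k l = (if Suc t = 0 then qbit nq x l else (qbit nq k (Xp (Suc t - 1)) \<noteq> qbit nq x (Xp (Suc t - 1))))"
  proof
    show "\<forall>p. base (Suc t) \<le> p \<longrightarrow> p < nq \<longrightarrow> qbit nq k p = qbit nq x p"
    proof (intro allI impI)
      fix p assume p: "base (Suc t) \<le> p" "p < nq"
      have "p \<notin> set (l # [0..<l])" using p l_base[of "Suc t"] by auto
      then have "qbit nq k p = qbit nq k' p" using g p by blast
      also have "\<dots> = qbit nq x p" using I' p by simp
      finally show "qbit nq k p = qbit nq x p" .
    qed
    show "qbit nq k l = (if Suc t = 0 then qbit nq x l else (qbit nq k (Xp (Suc t - 1)) \<noteq> qbit nq x (Xp (Suc t - 1))))"
      using g I' xx by simp
  qed
qed

lemma Inv_all: "t \<le> N2 \<Longrightarrow> Inv0 t"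
proof (induction t)
  case 0 then show ?case using Inv0_0 by simp
next
  case (Suc t)
  then have t: "t < N2" by simp
  show ?case using Suc t Inv20[OF t Inv12[OF t Inv01[OF t]]] by simp
qed

end

context r1 begin

lemma one_Q: assumes t: "t < N2" and I: "Inv0 t" and x: "x < d"
  shows "\<forall>i<d. \<forall>k<d. \<forall>k'<d. gQ t $$ (i, k) \<noteq> 0 \<longrightarrow> M0 t $$ (k, x) \<noteq> 0 \<longrightarrow>
                gQ t $$ (i, k') \<noteq> 0 \<longrightarrow> M0 t $$ (k', x) \<noteq> 0 \<longrightarrow> k = k'"
proof (intro allI impI)
  fix i k k' assume i: "i < d" and k: "k < d" and k': "k' < d"
    and a1: "gQ t $$ (i, k) \<noteq> 0" and a2: "M0 t $$ (k, x) \<noteq> 0"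
    and b1: "gQ t $$ (i, k') \<noteq> 0" and b2: "M0 t $$ (k', x) \<noteq> 0"
  have ag1: "\<forall>p<nq. p \<notin> set (l # Rp t) \<longrightarrow> qbit nq i p = qbit nq k p"
    using lift_nz[of i nq k "l # Rp t" Q] i k a1 by (simp add: gQ_def d_def)
  have ag2: "\<forall>p<nq. p \<notin> set (l # Rp t) \<longrightarrow> qbit nq i p = qbit nq k' p"
    using lift_nz[of i nq k' "l # Rp t" Q] i k' b1 by (simp add: gQ_def d_def)
  have I1: "(\<forall>p. base t \<le> p \<longrightarrow> p < nq \<longrightarrow> qbit nq k p = qbit nq x p) \<and>
   qbit nq k l = (if t = 0 then qbit nq x l else (qbit nq k (Xp (t - 1)) \<noteq> qbit nq x (Xp (t - 1))))"
    using I k x a2 unfolding Inv0_def by blast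
  have I2: "(\<forall>p. base t \<le> p \<longrightarrow> p < nq \<longrightarrow> qbit nq k' p = qbit nq x p) \<and>
   qbit nq k' l = (if t = 0 then qbit nq x l else (qbit nq k' (Xp (t - 1)) \<noteq> qbit nq x (Xp (t - 1))))"
    using I k' x b2 unfolding Inv0_def by blast
  show "k = k'"
  proof (rule idx_eq[OF k[unfolded d_def] k'[unfolded d_def]], intro allI impI)
    fix p assume p: "p < nq"
    show "qbit nq k p = qbit nq k' p"
    proof (cases "p \<in> set (Rp t)")
      case True
      then have "base t \<le> p" by (simp add: Rp_set)
      then show ?thesis using I1 I2 p by simp
    next
      case False
      show ?thesis
      proof (cases "p = l")
        case True
        show ?thesis
        proof (cases "t = 0")
          case True
          then show ?thesis using I1 I2 \<open>p = l\<close> by simp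
        next
          case False
          let ?X = "Xp (t - 1)"
          have "?X < base t" using False w1 by (simp add: Xp_def base_def) (metis Suc_pred less_Suc_eq_le mult_Suc add_le_cancel_left le_add2 add.commute le_diff_conv)
          moreover have "l < ?X" using l_base[of "t - 1"] Xp_base[of "t - 1"] by simp
          moreover have "?X < nq" using Xp_lt[of "t - 1"] t by simp
          ultimately have "?X \<notin> set (l # Rp t)" "?X < nq" by (auto simp: Rp_set)
          then have "qbit nq k ?X = qbit nq k' ?X" using ag1 ag2 by metis
          then show ?thesis using I1 I2 \<open>p = l\<close> False by simp
        qed
      next
        case False
        then have "p \<notin> set (l # Rp t)" using \<open>p \<notin> set (Rp t)\<close> by simp
        then show ?thesis using ag1 ag2 p by metis
      qed
    qed
  qed
qed

lemma one_C: assumes t: "t < N2"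
  shows "\<forall>i<d. \<forall>k<d. \<forall>k'<d. gC t $$ (i, k) \<noteq> 0 \<longrightarrow> M $$ (k, x) \<noteq> 0 \<longrightarrow>
                gC t $$ (i, k') \<noteq> 0 \<longrightarrow> M $$ (k', x) \<noteq> 0 \<longrightarrow> k = k'"
proof (intro allI impI)
  fix i k k' assume "i < d" "k < d" "k' < d" "gC t $$ (i, k) \<noteq> 0" "gC t $$ (i, k') \<noteq> 0"
  then show "k = k'" unfolding gC_def d_def
  proof (rule_tac lift_one[where ps = "[l, Xp t]" and U = CNOT])
    show "set [l, Xp t] \<subseteq> {..<nq}" "distinct [l, Xp t]" using gC_ps[OF t] by auto
    fix a c c' assume "a < 2 ^ length [l, Xp t]" "c < 2 ^ length [l, Xp t]" "c' < 2 ^ length [l, Xp t]"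
      "CNOT $$ (a, c) \<noteq> 0" "CNOT $$ (a, c') \<noteq> 0"
    then have "a = cnot_t c" "a = cnot_t c'" "c < 4" "c' < 4" using CNOT_entry[of a c] CNOT_entry[of a c']
      by (auto split: if_splits)
    then show "c = c'" using cnot_t_inj by metis
  qed
qed

lemma one_I:
  shows "\<forall>i<d. \<forall>k<d. \<forall>k'<d. gI $$ (i, k) \<noteq> 0 \<longrightarrow> M $$ (k, x) \<noteq> 0 \<longrightarrow>
                gI $$ (i, k') \<noteq> 0 \<longrightarrow> M $$ (k', x) \<noteq> 0 \<longrightarrow> k = k'"
proof (intro allI impI)
  fix i k k' assume "i < d" "k < d" "k' < d" "gI $$ (i, k) \<noteq> 0" "gI $$ (i, k') \<noteq> 0"
  then show "k = k'" unfolding gI_def d_def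
  proof (rule_tac lift_one[where ps = "l # [0..<l]" and U = "controlled l (incr (2 ^ l))"])
    show "set (l # [0..<l]) \<subseteq> {..<nq}" "distinct (l # [0..<l])" using gI_ps by auto
    fix a c c' assume "a < 2 ^ length (l # [0..<l])" "c < 2 ^ length (l # [0..<l])" "c' < 2 ^ length (l # [0..<l])"
      "controlled l (incr (2 ^ l)) $$ (a, c) \<noteq> 0" "controlled l (incr (2 ^ l)) $$ (a, c') \<noteq> 0"
    then have "a = cu_t l c" "a = cu_t l c'" "c < 2 ^ Suc l" "c' < 2 ^ Suc l" using CU_entry[of a l c] CU_entry[of a l c']
      by (auto split: if_splits)
    then show "c = c'" using cu_t_inj by metis
  qed
qed

end

context r1 begin

definition "ctr i = qread nq [0..<l] i"
definition "G0 b t x = {k. k < d \<and> (t = 0 \<or> qbit nq k l = b) \<and> ctr k = (ctr x + (if b then t else 0)) mod N2}"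
definition "G1 b t x = {k. k < d \<and> qbit nq k l = b \<and> ctr k = (ctr x + (if b then t else 0)) mod N2}"
definition "Pt t = (if t = 0 then l # Rp 0 else Rp t)"
definition "ff b t a = (\<Sum>a'<2 ^ w. if (2 ^ (w - 1) \<le> a') = b
    then wt Q a' (if t = 0 then a else (if b then 2 ^ (w - 1) else 0) + a) else 0)"

lemma ctr_qwrite: assumes "set ps \<subseteq> {..<nq}" "\<forall>p\<in>set ps. l \<le> p"
  shows "ctr (qwrite nq ps j a) = ctr j"
  unfolding ctr_def
proof (rule qread_cong, intro ballI)
  fix p assume "p \<in> set [0..<l]"
  then have "p < l" by simp
  then have "p \<notin> set ps" "p < nq" using assms l_lt by auto
  then show "qbit nq (qwrite nq ps j a) p = qbit nq j p" using qwrite_out assms(1) by blast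
qed

lemma sum_restrict: "S \<subseteq> {..<(D::nat)} \<Longrightarrow> sum f S = (\<Sum>i<D. if i \<in> S then f i else 0)"
  by (simp add: sum.If_cases Int_absorb1)

lemma G0_sub: "G0 b t x \<subseteq> {..<d}" by (auto simp: G0_def)
lemma G1_sub: "G1 b t x \<subseteq> {..<d}" by (auto simp: G1_def)

lemma ff_nonneg: "ff b t a \<ge> 0" unfolding ff_def by (intro sum_nonneg) (simp add: wt_nonneg)

lemma stageQ:
  assumes t: "t < N2" and I: "Inv0 t" and x: "x < d" and k: "k \<in> G0 b t x" and nz: "M0 t $$ (k, x) \<noteq> 0"
  shows "(\<Sum>i\<in>G1 b t x. wt (gQ t) i k) = ff b t (qread nq (Pt t) x)"
proof -
  let ?ps = "l # Rp t"
  let ?H = "(2::nat) ^ (w - 1)"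
  have kd: "k < d" using k by (simp add: G0_def)
  have ps: "set ?ps \<subseteq> {..<nq}" "distinct ?ps" using gQ_ps[OF t] by auto
  have len: "length ?ps = w" using w1 by (simp add: len_Rp)
  have psl: "\<forall>p\<in>set ?ps. l \<le> p" using l_base[of t] by (auto simp: Rp_set)
  have Ik: "(\<forall>p. base t \<le> p \<longrightarrow> p < nq \<longrightarrow> qbit nq k p = qbit nq x p) \<and>
   qbit nq k l = (if t = 0 then qbit nq x l else (qbit nq k (Xp (t - 1)) \<noteq> qbit nq x (Xp (t - 1))))"
    using I kd x nz unfolding Inv0_def by blast
  have rr: "qread nq (Rp t) k = qread nq (Rp t) x"
    by (rule qread_cong) (use Ik Rp_sub[OF t] in \<open>auto simp: Rp_set\<close>)
  have col: "qread nq ?ps k = (if t = 0 then qread nq (Pt t) x else (if b then ?H else 0) + qread nq (Pt t) x)"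
  proof (cases "t = 0")
    case True
    then show ?thesis using Ik rr by (simp add: qread_Cons Pt_def len_Rp)
  next
    case False
    then have "qbit nq k l = b" using k by (simp add: G0_def)
    then show ?thesis using False rr by (simp add: qread_Cons Pt_def len_Rp)
  qed
  have mem: "qwrite nq ?ps k a \<in> G1 b t x \<longleftrightarrow> (?H \<le> a) = b" if a: "a < 2 ^ w" for a
  proof -
    have "qwrite nq ?ps k a < d" using qwrite_less[OF ps(1)] kd by (simp add: d_def)
    moreover have "ctr (qwrite nq ?ps k a) = ctr k" by (rule ctr_qwrite[OF ps(1) psl])
    moreover have "qbit nq (qwrite nq ?ps k a) l = (a div ?H = 1)"
      using qwrite_head[OF l_lt, of "Rp t" k a] by (simp only: len_Rp)
    moreover have "(a div ?H = 1) = (?H \<le> a)"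
    proof -
      have "a < 2 * ?H" using a w1 by (metis Suc_diff_1 less_one not_less power_Suc zero_less_iff_neq_zero)
      show ?thesis
      proof (cases "?H \<le> a")
        case True
        have "a div ?H = Suc ((a - ?H) div ?H)" using True by (simp add: le_div_geq)
        moreover have "(a - ?H) div ?H = 0" using \<open>a < 2 * ?H\<close> by (simp add: div_less)
        ultimately show ?thesis using True by simp
      next
        case False
        then show ?thesis by (simp add: div_less)
      qed
    qed
    ultimately show ?thesis using k by (auto simp: G1_def G0_def)
  qed
  have "(\<Sum>i\<in>G1 b t x. wt (gQ t) i k) = (\<Sum>i<2 ^ nq. (\<lambda>i z. if i \<in> G1 b t x then (cmod z)\<^sup>2 else 0) i (gQ t $$ (i, k)))"
    by (subst sum_restrict[OF G1_sub[unfolded d_def]]) (unfold wt_def, rule refl)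
  also have "\<dots> = (\<Sum>a<2 ^ length ?ps. (\<lambda>i z. if i \<in> G1 b t x then (cmod z)\<^sup>2 else 0) (qwrite nq ?ps k a) (Q $$ (a, qread nq ?ps k)))"
    unfolding gQ_def by (rule lift_col_sum[OF ps kd[unfolded d_def]]) simp
  also have "\<dots> = ff b t (qread nq (Pt t) x)"
    unfolding ff_def len
  proof (rule sum.cong[OF refl])
    fix a :: nat assume "a \<in> {..<2 ^ w}"
    then have a: "a < 2 ^ w" by simp
    show "(\<lambda>i z. if i \<in> G1 b t x then (cmod z)\<^sup>2 else 0) (qwrite nq ?ps k a) (Q $$ (a, qread nq ?ps k)) =
      (if (?H \<le> a) = b then wt Q a (if t = 0 then qread nq (Pt t) x else (if b then ?H else 0) + qread nq (Pt t) x) else 0)"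
      by (simp only: mem[OF a] col wt_def)
  qed
  finally show ?thesis .
qed

end

context r1 begin

lemma stageC: assumes t: "t < N2" and k: "k \<in> G1 b t x"
  shows "(\<Sum>i\<in>G1 b t x. wt (gC t) i k) \<ge> 1"
proof -
  let ?ps = "[l, Xp t]"
  have kd: "k < d" using k by (simp add: G1_def)
  have ps: "set ?ps \<subseteq> {..<nq}" "distinct ?ps" using gC_ps[OF t] by auto
  have psl: "\<forall>p\<in>set ?ps. l \<le> p" using l_base[of t] Xp_base[of t] by auto
  define c where "c = qread nq ?ps k"
  have c4: "c < 4" using qread_less[of nq ?ps k] by (simp add: c_def)
  define i0 where "i0 = qwrite nq ?ps k (cnot_t c)"
  have ct: "cnot_t c < 2 ^ length ?ps" using cnot_t_props[OF c4] by simp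
  have i0d: "i0 < d" using qwrite_less[OF ps(1)] kd by (simp add: d_def i0_def)
  have ri0: "qread nq ?ps i0 = cnot_t c" unfolding i0_def by (rule qwrite_read[OF ps ct])
  have ag: "\<forall>p<nq. p \<notin> set ?ps \<longrightarrow> qbit nq i0 p = qbit nq k p"
    using qwrite_out[OF ps(1)] by (simp add: i0_def)
  have "gC t $$ (i0, k) = CNOT $$ (cnot_t c, c)"
    unfolding gC_def using i0d kd ag by (simp add: lift_entry d_def ri0 c_def)
  also have "\<dots> = 1" using CNOT_entry[OF _ c4] cnot_t_props[OF c4] by simp
  finally have w1': "wt (gC t) i0 k = 1" by (simp add: wt_def)
  have "qbit nq i0 l = qbit nq k l" using cnot_bits[of nq l "Xp t" i0 k] ri0 by (simp add: c_def)
  moreover have "ctr i0 = ctr k" unfolding i0_def by (rule ctr_qwrite[OF ps(1) psl])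
  ultimately have "i0 \<in> G1 b t x" using k i0d by (simp add: G1_def)
  then have "wt (gC t) i0 k \<le> (\<Sum>i\<in>G1 b t x. wt (gC t) i k)"
    by (intro member_le_sum) (auto simp: wt_nonneg intro: finite_subset[OF G1_sub])
  then show ?thesis using w1' by simp
qed

lemma stageI: assumes t: "t < N2" and k: "k \<in> G1 b t x"
  shows "(\<Sum>i\<in>G0 b (Suc t) x. wt gI i k) \<ge> 1"
proof -
  let ?ps = "l # [0..<l]"
  have kd: "k < d" using k by (simp add: G1_def)
  have ps: "set ?ps \<subseteq> {..<nq}" "distinct ?ps" using gI_ps by auto
  define c where "c = qread nq ?ps k"
  have cl: "c < 2 ^ Suc l" using qread_less[of nq ?ps k] by (simp add: c_def)
  define i0 where "i0 = qwrite nq ?ps k (cu_t l c)"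
  have ct: "cu_t l c < 2 ^ length ?ps" using cu_t_props[OF cl] by simp
  have i0d: "i0 < d" using qwrite_less[OF ps(1)] kd by (simp add: d_def i0_def)
  have ri0: "qread nq ?ps i0 = cu_t l c" unfolding i0_def by (rule qwrite_read[OF ps ct])
  have ag: "\<forall>p<nq. p \<notin> set ?ps \<longrightarrow> qbit nq i0 p = qbit nq k p"
    using qwrite_out[OF ps(1)] by (simp add: i0_def)
  have "gI $$ (i0, k) = controlled l (incr (2 ^ l)) $$ (cu_t l c, c)"
    unfolding gI_def using i0d kd ag by (simp add: lift_entry d_def ri0 c_def)
  also have "\<dots> = 1" using CU_entry[OF _ cl] cu_t_props[OF cl] by simp
  finally have w1': "wt gI i0 k = 1" by (simp add: wt_def)
  have bk: "qbit nq k l = b" and ck: "ctr k = (ctr x + (if b then t else 0)) mod N2" using k by (auto simp: G1_def)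
  have bi: "qbit nq i0 l = b"
    using cu_t_props[OF cl] qread_ctrl_less[of i0] qread_ctrl_less[of k] ri0 bk by (simp add: c_def)
  have ctrl: "ctr i < 2 ^ l" for i using qread_less[of nq "[0..<l]" i] by (simp add: ctr_def)
  have e0: "cu_t l c = (if b then 2 ^ l else 0) + ctr i0"
    using ri0 qread_ctrl[of i0] bi by (simp add: ctr_def)
  have e1: "c = (if b then 2 ^ l else 0) + ctr k"
    using qread_ctrl[of k] bk by (simp add: ctr_def c_def)
  have "ctr i0 = (ctr x + (if b then Suc t else 0)) mod N2"
  proof (cases b)
    case True
    then have "cu_t l c = 2 ^ l + (ctr k + 1) mod 2 ^ l" using e1 by (simp add: cu_t_def)
    then have "ctr i0 = (ctr k + 1) mod N2" using e0 True by (simp add: N2_l)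
    also have "\<dots> = (ctr x + Suc t) mod N2" using ck True by (simp add: mod_Suc_eq)
    finally show ?thesis using True by simp
  next
    case False
    then have "cu_t l c = c" using e1 ctrl[of k] by (simp add: cu_t_def)
    then have "ctr i0 = ctr k" using e0 e1 False by simp
    then show ?thesis using ck False by simp
  qed
  then have "i0 \<in> G0 b (Suc t) x" using i0d bi by (simp add: G0_def)
  then have "wt gI i0 k \<le> (\<Sum>i\<in>G0 b (Suc t) x. wt gI i k)"
    by (intro member_le_sum) (auto simp: wt_nonneg intro: finite_subset[OF G0_sub])
  then show ?thesis using w1' by simp
qed

definition "FF b t x = (\<Sum>k\<in>G0 b t x. wt (M0 t) k x)"

lemma FF_step: assumes t: "t < N2" and x: "x < d"
  shows "FF b (Suc t) x \<ge> ff b t (qread nq (Pt t) x) * FF b t x"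
proof -
  have I: "Inv0 t" using Inv_all t by simp
  have 1: "(\<Sum>i\<in>G1 b t x. wt (M1 t) i x) \<ge> ff b t (qread nq (Pt t) x) * FF b t x"
    unfolding M1_def FF_def
  proof (rule gate_bound[OF carriers(1) M0_carrier x one_Q[OF t I x] G0_sub G1_sub ff_nonneg])
    fix k assume "k \<in> G0 b t x" "M0 t $$ (k, x) \<noteq> 0"
    then show "ff b t (qread nq (Pt t) x) \<le> (\<Sum>i\<in>G1 b t x. wt (gQ t) i k)"
      using stageQ[OF t I x] by simp
  qed
  have 2: "(\<Sum>i\<in>G1 b t x. wt (M2 t) i x) \<ge> 1 * (\<Sum>i\<in>G1 b t x. wt (M1 t) i x)"
    unfolding M2_def
    by (rule gate_bound[OF carriers(2) M1_carrier x one_C[OF t] G1_sub G1_sub]) (use stageC[OF t] in auto)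
  have 3: "FF b (Suc t) x \<ge> 1 * (\<Sum>i\<in>G1 b t x. wt (M2 t) i x)"
    unfolding FF_def M0_Suc
    by (rule gate_bound[OF carriers(3) M2_carrier x one_I G1_sub G0_sub]) (use stageI[OF t] in auto)
  show ?thesis using 1 2 3 by simp
qed

lemma ctr_less: "ctr i < N2" using qread_less[of nq "[0..<l]" i] by (simp add: ctr_def N2_l)

lemma FF_0: assumes x: "x < d" shows "FF b 0 x = 1"
proof -
  have "x \<in> G0 b 0 x" using x ctr_less[of x] by (simp add: G0_def)
  have "FF b 0 x = (\<Sum>k\<in>G0 b 0 x. if k = x then 1 else 0)"
    unfolding FF_def by (rule sum.cong) (use x in \<open>auto simp: M0_def wt_def d_def nq_def G0_def\<close>)
  also have "\<dots> = 1" using \<open>x \<in> G0 b 0 x\<close> finite_subset[OF G0_sub] by simp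
  finally show ?thesis .
qed

lemma FF_prod: assumes x: "x < d" shows "T \<le> N2 \<Longrightarrow> FF b T x \<ge> (\<Prod>t<T. ff b t (qread nq (Pt t) x))"
proof (induction T)
  case 0 then show ?case using FF_0[OF x] by simp
next
  case (Suc T)
  then have T: "T < N2" by simp
  have "(\<Prod>t<Suc T. ff b t (qread nq (Pt t) x)) = ff b T (qread nq (Pt T) x) * (\<Prod>t<T. ff b t (qread nq (Pt t) x))"
    by simp
  also have "\<dots> \<le> ff b T (qread nq (Pt T) x) * FF b T x"
    using Suc T by (intro mult_left_mono ff_nonneg) simp_all
  also have "\<dots> \<le> FF b (Suc T) x" by (rule FF_step[OF T x])
  finally show ?case .
qed

end

lemma cnj_mult_wt: "cnj z * z = complex_of_real ((cmod z)\<^sup>2)"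
  by (simp only: mult.commute[of "cnj z" z] complex_mult_cnj cmod_power2)

lemma mult_cnj_wt: "z * cnj z = complex_of_real ((cmod z)\<^sup>2)"
  by (simp only: complex_mult_cnj cmod_power2)

lemma top_bit: assumes "i < 2 ^ w" "w \<ge> 1" shows "qbit w i 0 \<longleftrightarrow> 2 ^ (w - 1) \<le> i"
proof -
  let ?H = "(2::nat) ^ (w - 1)"
  have i2: "i < 2 * ?H" using assms by (metis Suc_diff_1 less_one not_less power_Suc zero_less_iff_neq_zero)
  show ?thesis
  proof (cases "?H \<le> i")
    case True
    have "i div ?H = Suc ((i - ?H) div ?H)" using True by (simp add: le_div_geq)
    moreover have "(i - ?H) div ?H = 0" using i2 by (simp add: div_less)
    ultimately show ?thesis using True by (simp add: qbit_def)
  next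
    case False
    then show ?thesis by (simp add: qbit_def div_less)
  qed
qed

context r1 begin

definition "H = (2::nat) ^ (w - 1)"
lemma two_w: "(2::nat) ^ w = H + H" using w1 unfolding H_def
  by (metis Suc_diff_1 less_one mult_2 not_less power_Suc zero_less_iff_neq_zero)

lemma col_sum: assumes c: "c < 2 ^ w" shows "(\<Sum>a<2 ^ w. wt Q a c) = 1"
proof -
  have u: "cadj Q * Q = 1\<^sub>m (2 ^ w)" using QU by (simp add: is_circuit_def is_unitary_def)
  have cc: "cadj Q \<in> carrier_mat (2 ^ w) (2 ^ w)" using Qc by (simp add: cadj_def)
  have "(cadj Q * Q) $$ (c, c) = (\<Sum>a<2 ^ w. cadj Q $$ (c, a) * Q $$ (a, c))"
    by (rule mult_entry[OF cc Qc c c])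
  also have "\<dots> = (\<Sum>a<2 ^ w. complex_of_real (wt Q a c))"
    by (rule sum.cong) (use c Qc in \<open>auto simp: cadj_entry cnj_mult_wt wt_def\<close>)
  finally have "complex_of_real (\<Sum>a<2 ^ w. wt Q a c) = 1" using u c by simp
  then show ?thesis by (metis of_real_eq_1_iff)
qed

lemma row_sum: assumes a: "a < 2 ^ w" shows "(\<Sum>c<2 ^ w. wt Q a c) = 1"
proof -
  have u: "Q * cadj Q = 1\<^sub>m (2 ^ w)" using QU by (simp add: is_circuit_def is_unitary_def)
  have cc: "cadj Q \<in> carrier_mat (2 ^ w) (2 ^ w)" using Qc by (simp add: cadj_def)
  have "(Q * cadj Q) $$ (a, a) = (\<Sum>c<2 ^ w. Q $$ (a, c) * cadj Q $$ (c, a))"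
    by (rule mult_entry[OF Qc cc a a])
  also have "\<dots> = (\<Sum>c<2 ^ w. complex_of_real (wt Q a c))"
    by (rule sum.cong) (use a Qc in \<open>auto simp: cadj_entry mult_cnj_wt wt_def simp del: of_real_power\<close>)
  finally have "complex_of_real (\<Sum>c<2 ^ w. wt Q a c) = 1" using u a by simp
  then show ?thesis by (metis of_real_eq_1_iff)
qed

definition "Slo = (\<Sum>i<H. \<Sum>x<H. wt Q i x)"

lemma split_w: "(\<Sum>a<2 ^ w. f a) = (\<Sum>a<H. f a) + (\<Sum>a\<in>{H..<2 ^ w}. f a)" for f :: "nat \<Rightarrow> real"
  by (simp add: two_w lessThan_atLeast0 sum.atLeastLessThan_concat)

lemma p_formula: "p_acc w Q 1 = Slo / H"
proof -
  have "p_acc w Q 1 = (\<Sum>i<2 ^ w. \<Sum>x<2 ^ w. (if qbit w i 0 then 0 else 1) * (if qbit w x 0 then 0 else 1) * wt Q i x) / 2 ^ (w - 1)"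
    by (rule p_acc_formula[OF Qc w1])
  also have "(\<Sum>i<2 ^ w. \<Sum>x<2 ^ w. (if qbit w i 0 then 0 else 1) * (if qbit w x 0 then 0 else 1) * wt Q i x)
     = (\<Sum>i<2 ^ w. \<Sum>x<2 ^ w. (if i < H \<and> x < H then wt Q i x else 0))"
    by (intro sum.cong refl) (simp add: top_bit[OF _ w1] H_def not_le)
  also have "\<dots> = (\<Sum>i<H. \<Sum>x<2 ^ w. (if i < H \<and> x < H then wt Q i x else 0))"
    by (rule sum.mono_neutral_right) (auto simp: two_w)
  also have "\<dots> = Slo"
    unfolding Slo_def
  proof (rule sum.cong[OF refl])
    fix i assume "i \<in> {..<H}"
    then have "(\<Sum>x<2 ^ w. (if i < H \<and> x < H then wt Q i x else 0)) = (\<Sum>x<H. (if i < H \<and> x < H then wt Q i x else 0))"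
      by (intro sum.mono_neutral_right) (auto simp: two_w)
    also have "\<dots> = (\<Sum>x<H. wt Q i x)" using \<open>i \<in> _\<close> by simp
    finally show "(\<Sum>x<2 ^ w. (if i < H \<and> x < H then wt Q i x else 0)) = (\<Sum>x<H. wt Q i x)" .
  qed
  finally show ?thesis by (simp add: H_def)
qed

end

context r1 begin

lemma avg0: "(\<Sum>a<2 ^ w. ff b (0::nat) a) = real H"
proof -
  have "(\<Sum>a<2 ^ w. ff b (0::nat) a) = (\<Sum>a<2 ^ w. \<Sum>a'<2 ^ w. if (H \<le> a') = b then wt Q a' a else 0)"
    by (simp add: ff_def H_def cong: if_cong)
  also have "\<dots> = (\<Sum>a'<2 ^ w. \<Sum>a<2 ^ w. if (H \<le> a') = b then wt Q a' a else 0)"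
    by (rule sum.swap)
  also have "\<dots> = (\<Sum>a'<2 ^ w. if (H \<le> a') = b then 1 else 0)"
    by (rule sum.cong[OF refl]) (simp add: row_sum)
  also have "\<dots> = (\<Sum>a'<H. if (H \<le> a') = b then 1 else 0) + (\<Sum>a'\<in>{H..<2 ^ w}. if (H \<le> a') = b then 1 else 0)"
    by (rule split_w)
  also have "\<dots> = real H"
  proof (cases b)
    case True
    then show ?thesis by (simp add: two_w)
  next
    case False
    then show ?thesis by simp
  qed
  finally show ?thesis .
qed

lemma shift_hi: "(\<Sum>r<H. g (H + r)) = (\<Sum>c\<in>{H..<2 ^ w}. g c)" for g :: "nat \<Rightarrow> real"
proof -
  have "(\<Sum>c\<in>{0 + H..<H + H}. g c) = (\<Sum>r\<in>{0..<H}. g (r + H))" by (rule sum.shift_bounds_nat_ivl)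
  then show ?thesis by (simp add: two_w lessThan_atLeast0 add.commute)
qed

lemma Shh: "(\<Sum>a'\<in>{H..<2 ^ w}. \<Sum>c\<in>{H..<2 ^ w}. wt Q a' c) = Slo"
proof -
  let ?hi = "{H..<2 ^ w}"
  have hiH: "card ?hi = H" by (simp add: two_w)
  have c1: "(\<Sum>c\<in>?hi. (\<Sum>a'<H. wt Q a' c) + (\<Sum>a'\<in>?hi. wt Q a' c)) = real H"
  proof -
    have "(\<Sum>c\<in>?hi. (\<Sum>a'<H. wt Q a' c) + (\<Sum>a'\<in>?hi. wt Q a' c)) = (\<Sum>c\<in>?hi. 1)"
    proof (rule sum.cong[OF refl])
      fix c assume "c \<in> ?hi"
      then have "c < 2 ^ w" by simp
      then show "(\<Sum>a'<H. wt Q a' c) + (\<Sum>a'\<in>?hi. wt Q a' c) = 1"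
        using col_sum split_w[of "\<lambda>a'. wt Q a' c"] by simp
    qed
    then show ?thesis using hiH by simp
  qed
  have r1': "(\<Sum>a'<H. (\<Sum>c<H. wt Q a' c) + (\<Sum>c\<in>?hi. wt Q a' c)) = real H"
  proof -
    have "(\<Sum>a'<H. (\<Sum>c<H. wt Q a' c) + (\<Sum>c\<in>?hi. wt Q a' c)) = (\<Sum>a'<H. 1)"
    proof (rule sum.cong[OF refl])
      fix a' assume "a' \<in> {..<H}"
      then have "a' < 2 ^ w" by (simp add: two_w)
      then show "(\<Sum>c<H. wt Q a' c) + (\<Sum>c\<in>?hi. wt Q a' c) = 1"
        using row_sum split_w[of "wt Q a'"] by simp
    qed
    then show ?thesis by simp
  qed
  have sw1: "(\<Sum>c\<in>?hi. \<Sum>a'<H. wt Q a' c) = (\<Sum>a'<H. \<Sum>c\<in>?hi. wt Q a' c)" by (rule sum.swap)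
  have sw2: "(\<Sum>c\<in>?hi. \<Sum>a'\<in>?hi. wt Q a' c) = (\<Sum>a'\<in>?hi. \<Sum>c\<in>?hi. wt Q a' c)" by (rule sum.swap)
  show ?thesis using c1 r1' sw1 sw2 unfolding Slo_def sum.distrib by linarith
qed

lemma avgt: assumes "t \<noteq> (0::nat)" shows "(\<Sum>r<H. ff b t r) = Slo"
proof (cases b)
  case False
  have "(\<Sum>r<H. ff b t r) = (\<Sum>r<H. \<Sum>a'<H. wt Q a' r)"
  proof (rule sum.cong[OF refl])
    fix r assume "r \<in> {..<H}"
    have "ff b t r = (\<Sum>a'<2 ^ w. if \<not> H \<le> a' then wt Q a' r else 0)"
      using False assms by (simp add: ff_def H_def cong: if_cong)
    also have "\<dots> = (\<Sum>a'<H. wt Q a' r)" by (simp add: split_w)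
    finally show "ff b t r = (\<Sum>a'<H. wt Q a' r)" .
  qed
  also have "\<dots> = Slo" unfolding Slo_def by (rule sum.swap)
  finally show ?thesis .
next
  case True
  have "(\<Sum>r<H. ff b t r) = (\<Sum>r<H. \<Sum>a'\<in>{H..<2 ^ w}. wt Q a' (H + r))"
  proof (rule sum.cong[OF refl])
    fix r assume "r \<in> {..<H}"
    have "ff b t r = (\<Sum>a'<2 ^ w. if H \<le> a' then wt Q a' (H + r) else 0)"
      using True assms by (simp add: ff_def H_def cong: if_cong)
    also have "\<dots> = (\<Sum>a'\<in>{H..<2 ^ w}. wt Q a' (H + r))" by (simp add: split_w)
    finally show "ff b t r = (\<Sum>a'\<in>{H..<2 ^ w}. wt Q a' (H + r))" .
  qed
  also have "\<dots> = (\<Sum>a'\<in>{H..<2 ^ w}. \<Sum>r<H. wt Q a' (H + r))" by (rule sum.swap)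
  also have "\<dots> = (\<Sum>a'\<in>{H..<2 ^ w}. \<Sum>c\<in>{H..<2 ^ w}. wt Q a' c)"
    by (rule sum.cong[OF refl]) (rule shift_hi)
  also have "\<dots> = Slo" by (rule Shh)
  finally show ?thesis .
qed

lemma len_Pt: "length (Pt t) = (if t = 0 then w else w - 1)"
  using w1 by (simp add: Pt_def len_Rp)

lemma avg_prod: "(\<Prod>t<N2. (\<Sum>a<2 ^ length (Pt t). ff b t a) / 2 ^ length (Pt t)) = 1 / 2 * (Slo / H) ^ (N2 - 1)"
proof -
  define F :: "nat \<Rightarrow> real" where "F t = (\<Sum>a<2 ^ length (Pt t). ff b t a) / 2 ^ length (Pt t)" for t
  have N: "N2 = Suc (N2 - 1)" by (simp add: N2_def)
  have tw: "(2::real) ^ w = 2 * real H"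
  proof -
    have "real (2 ^ w) = real (H + H)" using two_w by simp
    then show ?thesis by simp
  qed
  have "(\<Prod>t<N2. F t) = F 0 * (\<Prod>t<N2 - 1. F (Suc t))"
    by (subst N) (rule prod.lessThan_Suc_shift)
  moreover have "F 0 = 1 / 2"
  proof -
    have a0: "(\<Sum>a<2 ^ w. ff b (0::nat) a) = real H" by (rule avg0)
    have hp: "real H > 0" by (simp add: H_def)
    have "F 0 = (\<Sum>a<2 ^ w. ff b (0::nat) a) / 2 ^ w" unfolding F_def by (simp add: len_Pt)
    also have "\<dots> = real H / (2 * real H)" using a0 tw by simp
    also have "\<dots> = 1 / 2" using hp by simp
    finally show ?thesis .
  qed
  moreover have "F (Suc t) = Slo / H" for t
  proof -
    have l1: "length (Pt (Suc t)) = w - 1" by (simp add: len_Pt)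
    have rH: "(2::real) ^ (w - 1) = real H" by (simp add: H_def)
    have "F (Suc t) = (\<Sum>a<H. ff b (Suc t) a) / real H"
      unfolding F_def l1 H_def[symmetric] rH by (rule refl)
    then show ?thesis using avgt[of "Suc t" b] by simp
  qed
  ultimately have "(\<Prod>t<N2. F t) = 1 / 2 * (Slo / H) ^ (N2 - 1)" by simp
  then show ?thesis by (simp add: F_def)
qed

end

context r1 begin

lemma N2_pos: "N2 > (0::nat)" by (simp add: N2_def)

lemma Pt_ok: "t < N2 \<Longrightarrow> set (Pt t) \<subseteq> {..<nq} \<and> distinct (Pt t) \<and> 0 \<notin> set (Pt t)"
proof -
  assume t: "t < N2"
  have b0: "0 < base s" for s by (simp add: base_def)
  have l0: "0 < l" by (simp add: l_def)
  show ?thesis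
  proof (cases "t = 0")
    case True
    then show ?thesis using gQ_ps[of 0] N2_pos b0[of 0] l0 by (auto simp: Pt_def Rp_set)
  next
    case False
    then show ?thesis using Rp_sub[OF t] b0[of t] by (auto simp: Pt_def Rp_set Rp_def)
  qed
qed

lemma Pt_below: "set (Pt t) \<subseteq> {..<base t + w}"
  using l_base[of t] l_base[of 0] by (auto simp: Pt_def Rp_set)

lemma Pt_above: "s \<noteq> 0 \<Longrightarrow> set (Pt s) \<subseteq> {base s..}"
  by (auto simp: Pt_def Rp_set)

lemma base_mono: "t < s \<Longrightarrow> base t + w \<le> base s"
proof -
  assume "t < s"
  then have "Suc t * w \<le> s * w" by (intro mult_right_mono) auto
  then show ?thesis by (simp add: base_def)
qed

lemma Pt_disj: "t \<noteq> s \<Longrightarrow> set (Pt t) \<inter> set (Pt s) = {}"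
proof -
  have aux: "set (Pt t) \<inter> set (Pt s) = {}" if ts: "t < s" for t s
  proof -
    have "s \<noteq> 0" using ts by simp
    then show ?thesis using Pt_below[of t] Pt_above[of s] base_mono[OF ts] by fastforce
  qed
  assume "t \<noteq> s"
  then show ?thesis using aux[of t s] aux[of s t] by (cases "t < s") (auto simp: Int_commute)
qed

lemma bit0_ctr: "\<not> qbit nq i 0 \<longleftrightarrow> ctr i < 2 ^ m"
proof -
  have "[0..<l] = 0 # [1..<Suc m]" by (simp add: l_def upt_conv_Cons)
  then have e: "ctr i = (if qbit nq i 0 then 2 ^ m else 0) + qread nq [1..<Suc m] i"
    by (simp add: ctr_def qread_Cons)
  have "qread nq [1..<Suc m] i < 2 ^ m" using qread_less[of nq "[1..<Suc m]" i]
    unfolding length_upt diff_Suc_1 .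
  then show ?thesis using e by auto
qed

lemma sumA_bound: assumes x: "x < d" "\<not> qbit nq x 0"
  shows "(\<Sum>i<d. (if qbit nq i 0 then 0 else 1) * wt (M0 N2) i x) \<ge> FF False N2 x + FF True N2 x"
proof -
  let ?A = "{i. i < d \<and> \<not> qbit nq i 0}"
  have sub: "G0 b N2 x \<subseteq> ?A" for b
  proof
    fix i assume i: "i \<in> G0 b N2 x"
    have "ctr i = ctr x"
      using i ctr_less[of x] by (auto simp: G0_def)
    then show "i \<in> ?A" using i x bit0_ctr by (auto simp: G0_def)
  qed
  have disj: "G0 False N2 x \<inter> G0 True N2 x = {}" using N2_pos by (auto simp: G0_def)
  have fin: "finite (G0 b N2 x)" for b using finite_subset[OF G0_sub] by blast
  have "FF False N2 x + FF True N2 x = (\<Sum>i\<in>G0 False N2 x \<union> G0 True N2 x. wt (M0 N2) i x)"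
    unfolding FF_def by (rule sum.union_disjoint[symmetric]) (use fin disj in auto)
  also have "\<dots> \<le> (\<Sum>i\<in>?A. wt (M0 N2) i x)"
    by (rule sum_mono2) (use sub in \<open>auto simp: wt_nonneg\<close>)
  also have "\<dots> = (\<Sum>i<d. (if qbit nq i 0 then 0 else 1) * wt (M0 N2) i x)"
    by (subst sum_restrict[of ?A d]) (auto intro!: sum.cong)
  finally show ?thesis .
qed

lemma main: "p_acc nq (M0 N2) 1 \<ge> (p_acc w Q 1) ^ (N2 - 1)"
proof -
  let ?A = "\<lambda>i. (if qbit nq i 0 then 0 else 1 :: real)"
  let ?P = "\<lambda>b x. (\<Prod>t<N2. ff b t (qread nq (Pt t) x))"
  have nq1: "nq \<ge> 1" by (simp add: nq_eq)
  have "p_acc nq (M0 N2) 1 = (\<Sum>i<2 ^ nq. \<Sum>x<2 ^ nq. ?A i * ?A x * wt (M0 N2) i x) / 2 ^ (nq - 1)"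
    by (rule p_acc_formula[OF M0_carrier[unfolded d_def] nq1])
  also have "(\<Sum>i<2 ^ nq. \<Sum>x<2 ^ nq. ?A i * ?A x * wt (M0 N2) i x) = (\<Sum>x<d. ?A x * (\<Sum>i<d. ?A i * wt (M0 N2) i x))"
    unfolding d_def by (subst sum.swap) (simp add: sum_distrib_left mult_ac)
  finally have pe: "p_acc nq (M0 N2) 1 = (\<Sum>x<d. ?A x * (\<Sum>i<d. ?A i * wt (M0 N2) i x)) / 2 ^ (nq - 1)" .
  have ge: "(\<Sum>x<d. ?A x * (\<Sum>i<d. ?A i * wt (M0 N2) i x)) \<ge> (\<Sum>x<d. ?A x * (?P False x + ?P True x))"
  proof (rule sum_mono)
    fix x assume "x \<in> {..<d}"
    then have x: "x < d" by simp
    show "?A x * (?P False x + ?P True x) \<le> ?A x * (\<Sum>i<d. ?A i * wt (M0 N2) i x)"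
    proof (cases "qbit nq x 0")
      case True then show ?thesis by simp
    next
      case False
      have "?P False x + ?P True x \<le> FF False N2 x + FF True N2 x"
        using FF_prod[OF x, of N2 False] FF_prod[OF x, of N2 True] by simp
      also have "\<dots> \<le> (\<Sum>i<d. ?A i * wt (M0 N2) i x)" by (rule sumA_bound[OF x False])
      finally show ?thesis using False by simp
    qed
  qed
  have ps: "(\<Sum>x<2 ^ nq. ?A x * ?P b x) = 2 ^ (nq - 1) * (1 / 2 * (Slo / H) ^ (N2 - 1))" for b
  proof -
    have "(\<Sum>x<2 ^ nq. ?A x * (\<Prod>t<N2. ff b t (qread nq (Pt t) x))) =
          2 ^ (nq - 1) * (\<Prod>t<N2. (\<Sum>a<2 ^ length (Pt t). ff b t a) / 2 ^ length (Pt t))"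
      by (rule prod_sum[OF nq1]) (use Pt_ok Pt_disj in auto)
    then show ?thesis by (simp only: avg_prod)
  qed
  have "(\<Sum>x<d. ?A x * (?P False x + ?P True x)) = (\<Sum>x<d. ?A x * ?P False x) + (\<Sum>x<d. ?A x * ?P True x)"
    by (simp add: distrib_left sum.distrib)
  also have "\<dots> = 2 ^ (nq - 1) * (Slo / H) ^ (N2 - 1)" using ps[of False] ps[of True] by (simp add: d_def)
  finally have "(\<Sum>x<d. ?A x * (\<Sum>i<d. ?A i * wt (M0 N2) i x)) \<ge> 2 ^ (nq - 1) * (Slo / H) ^ (N2 - 1)"
    using ge by simp
  then have "p_acc nq (M0 N2) 1 \<ge> (Slo / H) ^ (N2 - 1)"
    unfolding pe by (simp add: pos_le_divide_eq mult.commute)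
  then show ?thesis using p_formula by simp
qed

end

theorem proposition13:
  fixes w m N :: nat and Q :: "complex mat"
  assumes "w \<ge> 1" and "is_circuit w Q" and "N = 2 ^ m"
  shows "p_acc (R1_nqubits w m) (R1 w m Q) 1 \<ge> (p_acc w Q 1) ^ (2 * N - 1)"
proof -
  interpret r1 w m Q using assms(1,2) by unfold_locales
  have "R1 w m Q = M0 N2" by (simp add: R1_def M0_def N2_def)
  moreover have "R1_nqubits w m = nq" by (simp add: nq_def)
  moreover have "2 * N - 1 = N2 - 1" using assms(3) by (simp add: N2_def)
  ultimately show ?thesis using main by simp
qed

end
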